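(* Let $G$ be a graph with no induced $P_7$, $C_4$, $C_6$ or $C_7$. Let $C=v_1-v_2-v_3-v_4-v_5-v_1$ be an induced $C_5$ of $G$ and let $K$ be a component of $G[S_0]$ that is not a clique. Then, with indices modulo $5$: (1) every vertex in $N(K)\cap S(v_{i-2},v_{i+2})$ is complete to $K$; (2) $N(K)\cap S(v_{i-1},v_i,v_{i+1})$ or $N(K)\cap S(v_{i+1},v_{i+2},v_{i+3})$ is empty; (3) if $p,q\in N(K)$ are non-adjacent, then $p\in S(v_{i-1},v_i,v_{i+1})$ and $q\in S(v_{i-2},v_{i+2})$ for some $i$ (after possibly swapping $p$ and $q$); (4) $N(K)$ cannot contain four vertices $p,p',q,q'$ with $p\in S(v_{i-1},v_i,v_{i+1})$, $q\in S(v_{i-2},v_{i+2})$, $p'\in S(v_i,v_{i+1},v_{i+2})$ and $q'\in S(v_{i-2},v_{i-1})$.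
   Context: For $X\subseteq V(C)$, $S(X)$ is the set of vertices $v\in V(G)\setminus V(C)$ with $N(v)\cap V(C)=X$ (set braces are omitted, e.g. $S(v_1,v_2)=S(\{v_1,v_2\})$); $S_0=S(\emptyset)$. $N(K)$ is the set of vertices outside $K$ having a neighbor in $K$. *)

theory Defs
  imports Main
begin

definition graph :: "'a set \<Rightarrow> ('a \<Rightarrow> 'a \<Rightarrow> bool) \<Rightarrow> bool" where
  "graph V E \<longleftrightarrow> finite V \<and> (\<forall>x y. E x y \<longrightarrow> E y x) \<and> (\<forall>x. \<not> E x x)
     \<and> (\<forall>x y. E x y \<longrightarrow> x \<in> V \<and> y \<in> V)"

definition induced_path :: "'a set \<Rightarrow> ('a \<Rightarrow> 'a \<Rightarrow> bool) \<Rightarrow> nat \<Rightarrow> (nat \<Rightarrow> 'a) \<Rightarrow> bool" where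
  "induced_path V E k f \<longleftrightarrow> inj_on f {0..<k} \<and> f ` {0..<k} \<subseteq> V \<and>
     (\<forall>i<k. \<forall>j<k. E (f i) (f j) \<longleftrightarrow> (j = i + 1 \<or> i = j + 1))"

definition induced_cycle :: "'a set \<Rightarrow> ('a \<Rightarrow> 'a \<Rightarrow> bool) \<Rightarrow> nat \<Rightarrow> (nat \<Rightarrow> 'a) \<Rightarrow> bool" where
  "induced_cycle V E k f \<longleftrightarrow> inj_on f {0..<k} \<and> f ` {0..<k} \<subseteq> V \<and>
     (\<forall>i<k. \<forall>j<k. E (f i) (f j) \<longleftrightarrow> (j = (i + 1) mod k \<or> i = (j + 1) mod k))"

definition Sset :: "'a set \<Rightarrow> ('a \<Rightarrow> 'a \<Rightarrow> bool) \<Rightarrow> 'a set \<Rightarrow> 'a set \<Rightarrow> 'a set" where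
  "Sset V E C X = {v \<in> V - C. {u \<in> C. E v u} = X}"

definition nbhd :: "'a set \<Rightarrow> ('a \<Rightarrow> 'a \<Rightarrow> bool) \<Rightarrow> 'a set \<Rightarrow> 'a set" where
  "nbhd V E K = {v \<in> V - K. \<exists>u\<in>K. E v u}"

definition component_of :: "('a \<Rightarrow> 'a \<Rightarrow> bool) \<Rightarrow> 'a set \<Rightarrow> 'a set \<Rightarrow> bool" where
  "component_of E A K \<longleftrightarrow>
     (\<exists>x\<in>A. K = {y \<in> A. (\<lambda>a b. E a b \<and> a \<in> A \<and> b \<in> A)\<^sup>*\<^sup>* x y})"

definition is_clique :: "('a \<Rightarrow> 'a \<Rightarrow> bool) \<Rightarrow> 'a set \<Rightarrow> bool" where
  "is_clique E K \<longleftrightarrow> (\<forall>x\<in>K. \<forall>y\<in>K. x \<noteq> y \<longrightarrow> E x y)"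

end

theory Submission
  imports Defs
begin
lemma graph_symE: "graph V E \<Longrightarrow> E x y = E y x"
  unfolding graph_def by blast
lemma all4: "(\<forall>i<(4::nat). P i) = (P 0 \<and> P 1 \<and> P 2 \<and> P 3)" by (simp add: numeral_eq_Suc All_less_Suc conj_ac)
lemma all6: "(\<forall>i<(6::nat). P i) = (P 0 \<and> P 1 \<and> P 2 \<and> P 3 \<and> P 4 \<and> P 5)" by (simp add: numeral_eq_Suc All_less_Suc conj_ac)
lemma all7: "(\<forall>i<(7::nat). P i) = (P 0 \<and> P 1 \<and> P 2 \<and> P 3 \<and> P 4 \<and> P 5 \<and> P 6)" by (simp add: numeral_eq_Suc All_less_Suc conj_ac)

lemma P7I:
  assumes g: "graph V E"
    and V: "x0 \<in> V" "x1 \<in> V" "x2 \<in> V" "x3 \<in> V" "x4 \<in> V" "x5 \<in> V" "x6 \<in> V"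
    and e: "E x0 x1" "E x1 x2" "E x2 x3" "E x3 x4" "E x4 x5" "E x5 x6"
    and n: "\<not> E x0 x2" "\<not> E x0 x3" "\<not> E x0 x4" "\<not> E x0 x5" "\<not> E x0 x6" "\<not> E x1 x3" "\<not> E x1 x4" "\<not> E x1 x5" "\<not> E x1 x6" "\<not> E x2 x4" "\<not> E x2 x5" "\<not> E x2 x6" "\<not> E x3 x5" "\<not> E x3 x6" "\<not> E x4 x6" 
  shows "\<exists>f. induced_path V E 7 f"
proof
  have s: "\<And>x y. E x y = E y x" using g graph_symE by metis
  have irr: "\<And>x. \<not> E x x" using g unfolding graph_def by blast
  have d0_1: "x0 \<noteq> x1" using e irr by (auto simp: s)
  have d0_2: "x0 \<noteq> x2" using e n by (auto simp: s)
  have d0_3: "x0 \<noteq> x3" using e n by (auto simp: s)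
  have d0_4: "x0 \<noteq> x4" using e n by (auto simp: s)
  have d0_5: "x0 \<noteq> x5" using e n by (auto simp: s)
  have d0_6: "x0 \<noteq> x6" using e n by (auto simp: s)
  have d1_2: "x1 \<noteq> x2" using e irr by (auto simp: s)
  have d1_3: "x1 \<noteq> x3" using e n by (auto simp: s)
  have d1_4: "x1 \<noteq> x4" using e n by (auto simp: s)
  have d1_5: "x1 \<noteq> x5" using e n by (auto simp: s)
  have d1_6: "x1 \<noteq> x6" using e n by (auto simp: s)
  have d2_3: "x2 \<noteq> x3" using e irr by (auto simp: s)
  have d2_4: "x2 \<noteq> x4" using e n by (auto simp: s)
  have d2_5: "x2 \<noteq> x5" using e n by (auto simp: s)
  have d2_6: "x2 \<noteq> x6" using e n by (auto simp: s)
  have d3_4: "x3 \<noteq> x4" using e irr by (auto simp: s)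
  have d3_5: "x3 \<noteq> x5" using e n by (auto simp: s)
  have d3_6: "x3 \<noteq> x6" using e n by (auto simp: s)
  have d4_5: "x4 \<noteq> x5" using e irr by (auto simp: s)
  have d4_6: "x4 \<noteq> x6" using e n by (auto simp: s)
  have d5_6: "x5 \<noteq> x6" using e irr by (auto simp: s)
  have d: "distinct [x0,x1,x2,x3,x4,x5,x6]" using d0_1 d0_2 d0_3 d0_4 d0_5 d0_6 d1_2 d1_3 d1_4 d1_5 d1_6 d2_3 d2_4 d2_5 d2_6 d3_4 d3_5 d3_6 d4_5 d4_6 d5_6 by simp
  show "induced_path V E 7 (nth [x0,x1,x2,x3,x4,x5,x6])"
    unfolding induced_path_def
  proof (intro conjI)
    show "inj_on (nth [x0,x1,x2,x3,x4,x5,x6]) {0..<7}"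
      by (rule inj_on_nth[OF d]) auto
    show "nth [x0,x1,x2,x3,x4,x5,x6] ` {0..<7} \<subseteq> V"
      using V by (auto simp: less_Suc_eq numeral_eq_Suc)
    show "\<forall>i<7. \<forall>j<7. E ([x0,x1,x2,x3,x4,x5,x6] ! i) ([x0,x1,x2,x3,x4,x5,x6] ! j) = (j = i + 1 \<or> i = j + 1)"
      using e n irr
      unfolding all7 by (simp add: s)
  qed
qed

lemma C4I:
  assumes g: "graph V E"
    and V: "x0 \<in> V" "x1 \<in> V" "x2 \<in> V" "x3 \<in> V"
    and e: "E x0 x1" "E x0 x3" "E x1 x2" "E x2 x3"
    and n: "\<not> E x0 x2" "\<not> E x1 x3"  and dd: "x0 \<noteq> x2" "x1 \<noteq> x3"
  shows "\<exists>f. induced_cycle V E 4 f"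
proof
  have s: "\<And>x y. E x y = E y x" using g graph_symE by metis
  have irr: "\<And>x. \<not> E x x" using g unfolding graph_def by blast
  have d0_1: "x0 \<noteq> x1" using e irr by (auto simp: s)
  have d0_2: "x0 \<noteq> x2" using dd by auto
  have d0_3: "x0 \<noteq> x3" using e irr by (auto simp: s)
  have d1_2: "x1 \<noteq> x2" using e irr by (auto simp: s)
  have d1_3: "x1 \<noteq> x3" using dd by auto
  have d2_3: "x2 \<noteq> x3" using e irr by (auto simp: s)
  have d: "distinct [x0,x1,x2,x3]" using d0_1 d0_2 d0_3 d1_2 d1_3 d2_3 by simp
  show "induced_cycle V E 4 (nth [x0,x1,x2,x3])"
    unfolding induced_cycle_def
  proof (intro conjI)
    show "inj_on (nth [x0,x1,x2,x3]) {0..<4}"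
      by (rule inj_on_nth[OF d]) auto
    show "nth [x0,x1,x2,x3] ` {0..<4} \<subseteq> V"
      using V by (auto simp: less_Suc_eq numeral_eq_Suc)
    show "\<forall>i<4. \<forall>j<4. E ([x0,x1,x2,x3] ! i) ([x0,x1,x2,x3] ! j) = (j = (i + 1) mod 4 \<or> i = (j + 1) mod 4)"
      using e n irr
      unfolding all4 by (simp add: s)
  qed
qed

lemma C6I:
  assumes g: "graph V E"
    and V: "x0 \<in> V" "x1 \<in> V" "x2 \<in> V" "x3 \<in> V" "x4 \<in> V" "x5 \<in> V"
    and e: "E x0 x1" "E x0 x5" "E x1 x2" "E x2 x3" "E x3 x4" "E x4 x5"
    and n: "\<not> E x0 x2" "\<not> E x0 x3" "\<not> E x0 x4" "\<not> E x1 x3" "\<not> E x1 x4" "\<not> E x1 x5" "\<not> E x2 x4" "\<not> E x2 x5" "\<not> E x3 x5" 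
  shows "\<exists>f. induced_cycle V E 6 f"
proof
  have s: "\<And>x y. E x y = E y x" using g graph_symE by metis
  have irr: "\<And>x. \<not> E x x" using g unfolding graph_def by blast
  have d0_1: "x0 \<noteq> x1" using e irr by (auto simp: s)
  have d0_2: "x0 \<noteq> x2" using e n by (auto simp: s)
  have d0_3: "x0 \<noteq> x3" using e n by (auto simp: s)
  have d0_4: "x0 \<noteq> x4" using e n by (auto simp: s)
  have d0_5: "x0 \<noteq> x5" using e irr by (auto simp: s)
  have d1_2: "x1 \<noteq> x2" using e irr by (auto simp: s)
  have d1_3: "x1 \<noteq> x3" using e n by (auto simp: s)
  have d1_4: "x1 \<noteq> x4" using e n by (auto simp: s)
  have d1_5: "x1 \<noteq> x5" using e n by (auto simp: s)
  have d2_3: "x2 \<noteq> x3" using e irr by (auto simp: s)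
  have d2_4: "x2 \<noteq> x4" using e n by (auto simp: s)
  have d2_5: "x2 \<noteq> x5" using e n by (auto simp: s)
  have d3_4: "x3 \<noteq> x4" using e irr by (auto simp: s)
  have d3_5: "x3 \<noteq> x5" using e n by (auto simp: s)
  have d4_5: "x4 \<noteq> x5" using e irr by (auto simp: s)
  have d: "distinct [x0,x1,x2,x3,x4,x5]" using d0_1 d0_2 d0_3 d0_4 d0_5 d1_2 d1_3 d1_4 d1_5 d2_3 d2_4 d2_5 d3_4 d3_5 d4_5 by simp
  show "induced_cycle V E 6 (nth [x0,x1,x2,x3,x4,x5])"
    unfolding induced_cycle_def
  proof (intro conjI)
    show "inj_on (nth [x0,x1,x2,x3,x4,x5]) {0..<6}"
      by (rule inj_on_nth[OF d]) auto
    show "nth [x0,x1,x2,x3,x4,x5] ` {0..<6} \<subseteq> V"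
      using V by (auto simp: less_Suc_eq numeral_eq_Suc)
    show "\<forall>i<6. \<forall>j<6. E ([x0,x1,x2,x3,x4,x5] ! i) ([x0,x1,x2,x3,x4,x5] ! j) = (j = (i + 1) mod 6 \<or> i = (j + 1) mod 6)"
      using e n irr
      unfolding all6 by (simp add: s)
  qed
qed

lemma C7I:
  assumes g: "graph V E"
    and V: "x0 \<in> V" "x1 \<in> V" "x2 \<in> V" "x3 \<in> V" "x4 \<in> V" "x5 \<in> V" "x6 \<in> V"
    and e: "E x0 x1" "E x0 x6" "E x1 x2" "E x2 x3" "E x3 x4" "E x4 x5" "E x5 x6"
    and n: "\<not> E x0 x2" "\<not> E x0 x3" "\<not> E x0 x4" "\<not> E x0 x5" "\<not> E x1 x3" "\<not> E x1 x4" "\<not> E x1 x5" "\<not> E x1 x6" "\<not> E x2 x4" "\<not> E x2 x5" "\<not> E x2 x6" "\<not> E x3 x5" "\<not> E x3 x6" "\<not> E x4 x6" 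
  shows "\<exists>f. induced_cycle V E 7 f"
proof
  have s: "\<And>x y. E x y = E y x" using g graph_symE by metis
  have irr: "\<And>x. \<not> E x x" using g unfolding graph_def by blast
  have d0_1: "x0 \<noteq> x1" using e irr by (auto simp: s)
  have d0_2: "x0 \<noteq> x2" using e n by (auto simp: s)
  have d0_3: "x0 \<noteq> x3" using e n by (auto simp: s)
  have d0_4: "x0 \<noteq> x4" using e n by (auto simp: s)
  have d0_5: "x0 \<noteq> x5" using e n by (auto simp: s)
  have d0_6: "x0 \<noteq> x6" using e irr by (auto simp: s)
  have d1_2: "x1 \<noteq> x2" using e irr by (auto simp: s)
  have d1_3: "x1 \<noteq> x3" using e n by (auto simp: s)
  have d1_4: "x1 \<noteq> x4" using e n by (auto simp: s)
  have d1_5: "x1 \<noteq> x5" using e n by (auto simp: s)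
  have d1_6: "x1 \<noteq> x6" using e n by (auto simp: s)
  have d2_3: "x2 \<noteq> x3" using e irr by (auto simp: s)
  have d2_4: "x2 \<noteq> x4" using e n by (auto simp: s)
  have d2_5: "x2 \<noteq> x5" using e n by (auto simp: s)
  have d2_6: "x2 \<noteq> x6" using e n by (auto simp: s)
  have d3_4: "x3 \<noteq> x4" using e irr by (auto simp: s)
  have d3_5: "x3 \<noteq> x5" using e n by (auto simp: s)
  have d3_6: "x3 \<noteq> x6" using e n by (auto simp: s)
  have d4_5: "x4 \<noteq> x5" using e irr by (auto simp: s)
  have d4_6: "x4 \<noteq> x6" using e n by (auto simp: s)
  have d5_6: "x5 \<noteq> x6" using e irr by (auto simp: s)
  have d: "distinct [x0,x1,x2,x3,x4,x5,x6]" using d0_1 d0_2 d0_3 d0_4 d0_5 d0_6 d1_2 d1_3 d1_4 d1_5 d1_6 d2_3 d2_4 d2_5 d2_6 d3_4 d3_5 d3_6 d4_5 d4_6 d5_6 by simp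
  show "induced_cycle V E 7 (nth [x0,x1,x2,x3,x4,x5,x6])"
    unfolding induced_cycle_def
  proof (intro conjI)
    show "inj_on (nth [x0,x1,x2,x3,x4,x5,x6]) {0..<7}"
      by (rule inj_on_nth[OF d]) auto
    show "nth [x0,x1,x2,x3,x4,x5,x6] ` {0..<7} \<subseteq> V"
      using V by (auto simp: less_Suc_eq numeral_eq_Suc)
    show "\<forall>i<7. \<forall>j<7. E ([x0,x1,x2,x3,x4,x5,x6] ! i) ([x0,x1,x2,x3,x4,x5,x6] ! j) = (j = (i + 1) mod 7 \<or> i = (j + 1) mod 7)"
      using e n irr
      unfolding all7 by (simp add: s)
  qed
qed

lemma all5: "(\<forall>i<(5::nat). P i) = (P 0 \<and> P 1 \<and> P 2 \<and> P 3 \<and> P 4)" by (simp add: numeral_eq_Suc All_less_Suc conj_ac)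
lemma ex5: "(\<exists>i<(5::nat). P i) = (P 0 \<or> P 1 \<or> P 2 \<or> P 3 \<or> P 4)" by (simp add: numeral_eq_Suc Ex_less_Suc disj_ac)

locale L9 =
  fixes V :: "'a set" and E :: "'a \<Rightarrow> 'a \<Rightarrow> bool" and c :: "nat \<Rightarrow> 'a" and K :: "'a set"
  assumes G: "graph V E"
    and noP7: "\<not> (\<exists>f. induced_path V E 7 f)"
    and noC4: "\<not> (\<exists>f. induced_cycle V E 4 f)"
    and noC6: "\<not> (\<exists>f. induced_cycle V E 6 f)"
    and noC7: "\<not> (\<exists>f. induced_cycle V E 7 f)"
    and C5: "induced_cycle V E 5 c"
    and K: "component_of E (Sset V E (c ` {0..<5}) {}) K"
    and notclique: "\<not> is_clique E K"
begin

abbreviation S0 where "S0 \<equiv> Sset V E (c ` {0..<5}) {}"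
abbreviation R where "R \<equiv> (\<lambda>a b. E a b \<and> a \<in> S0 \<and> b \<in> S0)"
abbreviation NK where "NK \<equiv> nbhd V E K"

lemma Es: "E x y = E y x" using G graph_symE by metis
lemma irr: "\<not> E x x" using G unfolding graph_def by blast
lemma EV: "E x y \<Longrightarrow> x \<in> V" using G unfolding graph_def by blast

lemma cV: "i < 5 \<Longrightarrow> c i \<in> V" using C5 unfolding induced_cycle_def by auto
lemma cinj: "i < 5 \<Longrightarrow> j < 5 \<Longrightarrow> (c i = c j) = (i = j)"
  using C5 unfolding induced_cycle_def inj_on_def by auto
lemma cE: "i < 5 \<Longrightarrow> j < 5 \<Longrightarrow> E (c i) (c j) = (j = Suc i mod 5 \<or> i = Suc j mod 5)"
  using C5 unfolding induced_cycle_def by auto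

lemma S0_iff: "u \<in> S0 \<longleftrightarrow> u \<in> V \<and> u \<notin> c ` {0..<5} \<and> (\<forall>i<5. \<not> E u (c i))"
  unfolding Sset_def by auto

lemma Kx0: "\<exists>x0\<in>S0. K = {y\<in>S0. R\<^sup>*\<^sup>* x0 y}"
  using K unfolding component_of_def by auto

lemma K_S0: "u \<in> K \<Longrightarrow> u \<in> S0" using Kx0 by auto
lemma K_noC: "u \<in> K \<Longrightarrow> i < 5 \<Longrightarrow> \<not> E u (c i)" using K_S0 S0_iff by blast
lemma K_noC': "u \<in> K \<Longrightarrow> i < 5 \<Longrightarrow> \<not> E (c i) u" using K_noC Es by blast
lemma K_V: "u \<in> K \<Longrightarrow> u \<in> V" using K_S0 S0_iff by blast
lemma K_notC: "u \<in> K \<Longrightarrow> i < 5 \<Longrightarrow> u \<noteq> c i" using K_S0 S0_iff by force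

lemma R_sym: "R\<^sup>*\<^sup>* a b \<Longrightarrow> R\<^sup>*\<^sup>* b a"
proof (induction rule: rtranclp_induct)
  case base then show ?case by simp
next
  case (step y z)
  then have "R z y" by (simp add: Es)
  then show ?case using step(3) by (rule converse_rtranclp_into_rtranclp)
qed

lemma K_conn: "u \<in> K \<Longrightarrow> w \<in> K \<Longrightarrow> R\<^sup>*\<^sup>* u w"
proof -
  assume u: "u \<in> K" and w: "w \<in> K"
  obtain x0 where x0: "x0 \<in> S0" "K = {y\<in>S0. R\<^sup>*\<^sup>* x0 y}" using Kx0 by blast
  have a: "R\<^sup>*\<^sup>* x0 u" and b: "R\<^sup>*\<^sup>* x0 w" using u w x0 by auto
  have a': "R\<^sup>*\<^sup>* u x0" using R_sym[OF a] .
  show ?thesis using rtranclp_trans[OF a' b] .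
qed

lemma K_closed: "R\<^sup>*\<^sup>* a b \<Longrightarrow> a \<in> K \<Longrightarrow> b \<in> K"
proof (induction rule: rtranclp_induct)
  case base then show ?case by simp
next
  case (step y z)
  obtain x0 where x0: "x0 \<in> S0" "K = {y\<in>S0. R\<^sup>*\<^sup>* x0 y}" using Kx0 by blast
  have "y \<in> K" using step by simp
  then have "R\<^sup>*\<^sup>* x0 y" using x0 by simp
  then have "R\<^sup>*\<^sup>* x0 z" using step(2) by (rule rtranclp.rtrancl_into_rtrancl)
  then show ?case using x0 step(2) by simp
qed

lemma split_edge: "R\<^sup>*\<^sup>* a b \<Longrightarrow> a \<in> K \<Longrightarrow> P a \<Longrightarrow> \<not> P b \<Longrightarrow>
   \<exists>u w. u \<in> K \<and> w \<in> K \<and> E u w \<and> P u \<and> \<not> P w"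
proof (induction rule: rtranclp_induct)
  case base then show ?case by simp
next
  case (step y z)
  show ?case
  proof (cases "P y")
    case True
    have "y \<in> K" using K_closed[OF step(1)] step.prems by blast
    moreover have "z \<in> K" using K_closed[OF rtranclp.rtrancl_into_rtrancl[OF step(1) step(2)]] step.prems by blast
    moreover have "E y z" using step(2) by simp
    ultimately show ?thesis using True step.prems by blast
  next
    case False then show ?thesis using step.IH step.prems by blast
  qed
qed

lemma noncomplete: "u0 \<in> K \<Longrightarrow> w0 \<in> K \<Longrightarrow> E x u0 \<Longrightarrow> \<not> E x w0 \<Longrightarrow>
   \<exists>u w. u \<in> K \<and> w \<in> K \<and> E u w \<and> E x u \<and> \<not> E x w"
proof -
  assume h: "u0 \<in> K" "w0 \<in> K" "E x u0" "\<not> E x w0"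
  have "R\<^sup>*\<^sup>* u0 w0" using K_conn h(1,2) by blast
  from split_edge[where P="E x", OF this h(1) h(3) h(4)] show ?thesis .
qed

lemma NK_iff: "x \<in> NK \<longleftrightarrow> x \<in> V \<and> x \<notin> K \<and> (\<exists>u\<in>K. E x u)"
  unfolding nbhd_def by auto

lemma NK_notC: "x \<in> NK \<Longrightarrow> x \<notin> c ` {0..<5}"
proof
  assume x: "x \<in> NK" and xc: "x \<in> c ` {0..<5}"
  obtain u where u: "u \<in> K" "E x u" using x NK_iff by blast
  obtain i where i: "i < 5" "x = c i" using xc by auto
  show False using K_noC'[OF u(1) i(1)] u(2) i(2) by simp
qed

lemma NK_notC': assumes "x \<in> NK" "i < 5" shows "x \<noteq> c i"
proof
  assume "x = c i"
  then have "x \<in> c ` {0..<5}" using assms(2) by auto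
  then show False using NK_notC assms(1) by blast
qed

lemma NK_nonempty: "x \<in> NK \<Longrightarrow> \<exists>i<5. E x (c i)"
proof (rule ccontr)
  assume x: "x \<in> NK" and no: "\<not> (\<exists>i<5. E x (c i))"
  then have xS: "x \<in> S0" using NK_notC NK_iff S0_iff by auto
  obtain u where u: "u \<in> K" "E x u" using x NK_iff by auto
  have "R u x" using u xS K_S0 Es by auto
  then have "x \<in> K" using K_closed u(1) by blast
  then show False using x NK_iff by auto
qed

lemma walk: "R\<^sup>*\<^sup>* a b \<Longrightarrow> a \<in> K \<Longrightarrow> \<exists>n f. 1 \<le> n \<and> f 0 = a \<and> f (n - 1) = b \<and> (\<forall>i<n. f i \<in> K)
   \<and> (\<forall>i. Suc i < n \<longrightarrow> E (f i) (f (Suc i)))"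
proof (induction rule: rtranclp_induct)
  case base
  show ?case by (rule exI[of _ 1], rule exI[of _ "\<lambda>_. a"]) (use base in auto)
next
  case (step y z)
  obtain n f where nf: "1 \<le> n" "f 0 = a" "f (n - 1) = y" "\<forall>i<n. f i \<in> K"
     "\<forall>i. Suc i < n \<longrightarrow> E (f i) (f (Suc i))" using step by blast
  have zK: "z \<in> K" using K_closed[OF rtranclp.rtrancl_into_rtrancl[OF step(1) step(2)]] step by blast
  show ?case
  proof (rule exI[of _ "Suc n"], rule exI[of _ "f(n := z)"], intro conjI allI impI)
    show "1 \<le> Suc n" by simp
    show "(f(n := z)) 0 = a" using nf by auto
    show "(f(n := z)) (Suc n - 1) = z" by simp
    fix i
    show "i < Suc n \<Longrightarrow> (f(n := z)) i \<in> K" using nf zK by (auto simp: less_Suc_eq)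
    assume i: "Suc i < Suc n"
    show "E ((f(n := z)) i) ((f(n := z)) (Suc i))"
    proof (cases "Suc i = n")
      case True
      then have "f i = y" using nf by (metis diff_Suc_1)
      then show ?thesis using True step(2) by auto
    next
      case False
      then show ?thesis using i nf by auto
    qed
  qed
qed

lemma Sset_iff: "A \<subseteq> {0..<5} \<Longrightarrow> x \<in> Sset V E (c ` {0..<5}) (c ` A) \<longleftrightarrow>
    x \<in> V \<and> x \<notin> c ` {0..<5} \<and> (\<forall>j<5. E x (c j) = (j \<in> A))"
proof -
  assume A: "A \<subseteq> {0..<5}"
  have "{u \<in> c ` {0..<5}. E x u} = c ` A \<longleftrightarrow> (\<forall>j<5. E x (c j) = (j \<in> A))"
  proof
    assume h: "{u \<in> c ` {0..<5}. E x u} = c ` A"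
    show "\<forall>j<5. E x (c j) = (j \<in> A)"
    proof (intro allI impI)
      fix j assume j: "j < (5::nat)"
      have "E x (c j) \<longleftrightarrow> c j \<in> {u \<in> c ` {0..<5}. E x u}" using j by auto
      also have "\<dots> \<longleftrightarrow> c j \<in> c ` A" using h by simp
      also have "\<dots> \<longleftrightarrow> j \<in> A" using j A cinj by auto
      finally show "E x (c j) = (j \<in> A)" .
    qed
  next
    assume h: "\<forall>j<5. E x (c j) = (j \<in> A)"
    show "{u \<in> c ` {0..<5}. E x u} = c ` A" using h A by auto
  qed
  then show ?thesis unfolding Sset_def by auto
qed

end

context L9
begin

lemmas simpset = Es cV K_V K_noC K_noC' irr

lemma ELP:
  assumes "u \<in> K" "y \<in> V" "x \<in> V" "E y u" "E u x" "\<not> E x y"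
    and "j0 < 5" "j1 < 5" "j2 < 5" "j3 < 5"
    and "E (c j0) (c j1)" "E (c j1) (c j2)" "E (c j2) (c j3)"
    and "\<not> E (c j0) (c j2)" "\<not> E (c j0) (c j3)" "\<not> E (c j1) (c j3)"
  shows "\<not> (E x (c j0) \<and> \<not> E x (c j1) \<and> \<not> E x (c j2) \<and> \<not> E x (c j3)
            \<and> \<not> E y (c j0) \<and> \<not> E y (c j1) \<and> \<not> E y (c j2) \<and> \<not> E y (c j3))"
proof
  assume h: "E x (c j0) \<and> \<not> E x (c j1) \<and> \<not> E x (c j2) \<and> \<not> E x (c j3)
            \<and> \<not> E y (c j0) \<and> \<not> E y (c j1) \<and> \<not> E y (c j2) \<and> \<not> E y (c j3)"
  have "\<exists>f. induced_path V E 7 f"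
    by (rule P7I[OF G, of y u x "c j0" "c j1" "c j2" "c j3"]) (insert assms h, auto simp: simpset)
  with noP7 show False by blast
qed

lemma EL2:
  assumes "x \<in> V" "\<And>i. i < 5 \<Longrightarrow> x \<noteq> c i"
    and "j0 < 5" "j1 < 5" "j2 < 5" "j0 \<noteq> j2"
    and "E (c j0) (c j1)" "E (c j1) (c j2)" "\<not> E (c j0) (c j2)"
  shows "\<not> (E x (c j0) \<and> E x (c j2) \<and> \<not> E x (c j1))"
proof
  assume h: "E x (c j0) \<and> E x (c j2) \<and> \<not> E x (c j1)"
  have "\<exists>f. induced_cycle V E 4 f"
    by (rule C4I[OF G, of x "c j0" "c j1" "c j2"]) (insert assms h, auto simp: simpset cinj)
  with noC4 show False by blast
qed

lemma EL3:
  assumes "p \<in> V" "q \<in> V" "p \<noteq> q" "\<not> E p q"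
    and "j0 < 5" "j2 < 5" "j0 \<noteq> j2" "\<not> E (c j0) (c j2)"
  shows "\<not> (E p (c j0) \<and> E q (c j0) \<and> E p (c j2) \<and> E q (c j2))"
proof
  assume h: "E p (c j0) \<and> E q (c j0) \<and> E p (c j2) \<and> E q (c j2)"
  have "\<exists>f. induced_cycle V E 4 f"
    by (rule C4I[OF G, of p "c j0" q "c j2"]) (insert assms h, auto simp: simpset cinj)
  with noC4 show False by blast
qed

lemma EL4:
  assumes "p \<in> V" "q \<in> V" "u \<in> K" "E p u" "E q u" "\<not> E p q" "p \<noteq> q"
    and "j < 5"
  shows "\<not> (E p (c j) \<and> E q (c j))"
proof
  assume h: "E p (c j) \<and> E q (c j)"
  have "\<exists>f. induced_cycle V E 4 f"
    by (rule C4I[OF G, of p u q "c j"]) (insert assms h, auto simp: simpset K_notC)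
  with noC4 show False by blast
qed

lemma EL5:
  assumes "p \<in> V" "q \<in> V" "u \<in> K" "E p u" "E q u" "\<not> E p q"
    and "j0 < 5" "j1 < 5" "j2 < 5"
    and "E (c j0) (c j1)" "E (c j1) (c j2)" "\<not> E (c j0) (c j2)"
  shows "\<not> (E p (c j0) \<and> \<not> E p (c j1) \<and> \<not> E p (c j2) \<and> E q (c j2) \<and> \<not> E q (c j1) \<and> \<not> E q (c j0))"
proof
  assume h: "E p (c j0) \<and> \<not> E p (c j1) \<and> \<not> E p (c j2) \<and> E q (c j2) \<and> \<not> E q (c j1) \<and> \<not> E q (c j0)"
  have "\<exists>f. induced_cycle V E 6 f"
    by (rule C6I[OF G, of p u q "c j2" "c j1" "c j0"]) (insert assms h, auto simp: simpset)
  with noC6 show False by blast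
qed

lemma EL6:
  assumes "p \<in> V" "q \<in> V" "u \<in> K" "E p u" "E q u" "\<not> E p q"
    and "j0 < 5" "j1 < 5" "j2 < 5" "j3 < 5"
    and "E (c j0) (c j1)" "E (c j1) (c j2)" "E (c j2) (c j3)"
    and "\<not> E (c j0) (c j2)" "\<not> E (c j0) (c j3)" "\<not> E (c j1) (c j3)"
  shows "\<not> (E p (c j0) \<and> \<not> E p (c j1) \<and> \<not> E p (c j2) \<and> \<not> E p (c j3)
          \<and> E q (c j3) \<and> \<not> E q (c j0) \<and> \<not> E q (c j1) \<and> \<not> E q (c j2))"
proof
  assume h: "E p (c j0) \<and> \<not> E p (c j1) \<and> \<not> E p (c j2) \<and> \<not> E p (c j3)
          \<and> E q (c j3) \<and> \<not> E q (c j0) \<and> \<not> E q (c j1) \<and> \<not> E q (c j2)"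
  have "\<exists>f. induced_cycle V E 7 f"
    by (rule C7I[OF G, of p u q "c j3" "c j2" "c j1" "c j0"]) (insert assms h, auto simp: simpset)
  with noC7 show False by blast
qed

lemma EL8:
  assumes "p \<in> V" "q \<in> V" "E p q" "j0 < 5" "j1 < 5" "p \<noteq> c j1" "q \<noteq> c j0"
    and "E (c j0) (c j1)"
  shows "\<not> (E p (c j0) \<and> \<not> E p (c j1) \<and> E q (c j1) \<and> \<not> E q (c j0))"
proof
  assume h: "E p (c j0) \<and> \<not> E p (c j1) \<and> E q (c j1) \<and> \<not> E q (c j0)"
  have "\<exists>f. induced_cycle V E 4 f"
    by (rule C4I[OF G, of p q "c j1" "c j0"]) (insert assms h, auto simp: simpset)
  with noC4 show False by blast
qed

lemma EL9:
  assumes "p \<in> V" "q \<in> V" "x0 \<in> K" "x1 \<in> K" "E p x0" "E x0 x1" "E x1 q"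
    "\<not> E p x1" "\<not> E x0 q" "\<not> E p q"
    and "j0 < 5" "j1 < 5" "E (c j0) (c j1)"
  shows "\<not> (E q (c j0) \<and> \<not> E q (c j1) \<and> E p (c j1) \<and> \<not> E p (c j0))"
proof
  assume h: "E q (c j0) \<and> \<not> E q (c j1) \<and> E p (c j1) \<and> \<not> E p (c j0)"
  have "\<exists>f. induced_cycle V E 6 f"
    by (rule C6I[OF G, of p x0 x1 q "c j0" "c j1"]) (insert assms h, auto simp: simpset)
  with noC6 show False by blast
qed

lemma EL10:
  assumes "p \<in> V" "q \<in> V" "x0 \<in> K" "x1 \<in> K" "E p x0" "E x0 x1" "E x1 q"
    "\<not> E p x1" "\<not> E x0 q" "\<not> E p q"
    and "j0 < 5" "j1 < 5" "j2 < 5" "E (c j0) (c j1)" "E (c j1) (c j2)" "\<not> E (c j0) (c j2)"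
  shows "\<not> (E q (c j0) \<and> \<not> E q (c j1) \<and> \<not> E q (c j2) \<and> E p (c j2) \<and> \<not> E p (c j0) \<and> \<not> E p (c j1))"
proof
  assume h: "E q (c j0) \<and> \<not> E q (c j1) \<and> \<not> E q (c j2) \<and> E p (c j2) \<and> \<not> E p (c j0) \<and> \<not> E p (c j1)"
  have "\<exists>f. induced_cycle V E 7 f"
    by (rule C7I[OF G, of p x0 x1 q "c j0" "c j1" "c j2"]) (insert assms h, auto simp: simpset)
  with noC7 show False by blast
qed

lemma EL11:
  assumes "p \<in> V" "q \<in> V" "x0 \<in> K" "x1 \<in> K" "x2 \<in> K" "E p x0" "E x0 x1" "E x1 x2" "E x2 q"
    "\<not> E p x1" "\<not> E p x2" "\<not> E p q" "\<not> E x0 x2" "\<not> E x0 q" "\<not> E x1 q"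
    and "j < 5"
  shows "\<not> (E p (c j) \<and> E q (c j))"
proof
  assume h: "E p (c j) \<and> E q (c j)"
  have "\<exists>f. induced_cycle V E 6 f"
    by (rule C6I[OF G, of p x0 x1 x2 q "c j"]) (insert assms h, auto simp: simpset)
  with noC6 show False by blast
qed

lemma EL12:
  assumes "p \<in> V" "x0 \<in> K" "x1 \<in> K" "x2 \<in> K" "x3 \<in> K" "E p x0" "E x0 x1" "E x1 x2" "E x2 x3"
    "\<not> E p x1" "\<not> E p x2" "\<not> E p x3" "\<not> E x0 x2" "\<not> E x0 x3" "\<not> E x1 x3"
    and "j0 < 5" "j1 < 5" "E (c j0) (c j1)"
  shows "\<not> (E p (c j0) \<and> \<not> E p (c j1))"
proof
  assume h: "E p (c j0) \<and> \<not> E p (c j1)"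
  have "\<exists>f. induced_path V E 7 f"
    by (rule P7I[OF G, of "c j1" "c j0" p x0 x1 x2 x3]) (insert assms h, auto simp: simpset)
  with noP7 show False by blast
qed

end

context L9
begin

lemma ELK:
  assumes "u \<in> K" "w \<in> K" "x \<in> V" "E u w" "E x u" "\<not> E x w"
    and "j0 < 5" "j1 < 5" "j2 < 5" "j3 < 5"
    and "E (c j0) (c j1)" "E (c j1) (c j2)" "E (c j2) (c j3)"
    and "\<not> E (c j0) (c j2)" "\<not> E (c j0) (c j3)" "\<not> E (c j1) (c j3)"
  shows "\<not> (E x (c j0) \<and> \<not> E x (c j1) \<and> \<not> E x (c j2) \<and> \<not> E x (c j3))"
proof -
  have wu: "E w u" using assms(4) Es by metis
  have ux: "E u x" using assms(5) Es by metis
  have "\<not> (E x (c j0) \<and> \<not> E x (c j1) \<and> \<not> E x (c j2) \<and> \<not> E x (c j3)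
            \<and> \<not> E w (c j0) \<and> \<not> E w (c j1) \<and> \<not> E w (c j2) \<and> \<not> E w (c j3))"
    by (rule ELP[OF assms(1) K_V[OF assms(2)] assms(3) wu ux assms(6) assms(7-16)])
  then show ?thesis using K_noC[OF assms(2)] assms(7-10) by blast
qed

lemma fam_shape:
  assumes "x \<in> V" "\<forall>i<5. x \<noteq> c i"
  shows "\<not> (E x (c 0) \<and> E x (c 2) \<and> \<not> E x (c 1))"
    "\<not> (E x (c 1) \<and> E x (c 3) \<and> \<not> E x (c 2))"
    "\<not> (E x (c 2) \<and> E x (c 4) \<and> \<not> E x (c 3))"
    "\<not> (E x (c 3) \<and> E x (c 0) \<and> \<not> E x (c 4))"
    "\<not> (E x (c 4) \<and> E x (c 1) \<and> \<not> E x (c 0))"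
  by (rule EL2[OF assms(1) assms(2)[rule_format]]; simp add: cE)+

lemma fam_cross:
  assumes "p \<in> V" "q \<in> V" "p \<noteq> q" "\<not> E p q"
  shows "\<not> (E p (c 0) \<and> E q (c 0) \<and> E p (c 2) \<and> E q (c 2))"
    "\<not> (E p (c 1) \<and> E q (c 1) \<and> E p (c 3) \<and> E q (c 3))"
    "\<not> (E p (c 2) \<and> E q (c 2) \<and> E p (c 4) \<and> E q (c 4))"
    "\<not> (E p (c 3) \<and> E q (c 3) \<and> E p (c 0) \<and> E q (c 0))"
    "\<not> (E p (c 4) \<and> E q (c 4) \<and> E p (c 1) \<and> E q (c 1))"
  by (rule EL3[OF assms]; simp add: cE)+

lemma fam_EL4:
  assumes "p \<in> V" "q \<in> V" "u \<in> K" "E p u" "E q u" "\<not> E p q" "p \<noteq> q"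
  shows "\<not> (E p (c 0) \<and> E q (c 0))"
    "\<not> (E p (c 1) \<and> E q (c 1))"
    "\<not> (E p (c 2) \<and> E q (c 2))"
    "\<not> (E p (c 3) \<and> E q (c 3))"
    "\<not> (E p (c 4) \<and> E q (c 4))"
  by (rule EL4[OF assms]; simp add: cE)+

lemma fam_EL5:
  assumes "p \<in> V" "q \<in> V" "u \<in> K" "E p u" "E q u" "\<not> E p q"
  shows "\<not> (E p (c 0) \<and> \<not> E p (c 1) \<and> \<not> E p (c 2) \<and> E q (c 2) \<and> \<not> E q (c 1) \<and> \<not> E q (c 0))"
    "\<not> (E p (c 0) \<and> \<not> E p (c 4) \<and> \<not> E p (c 3) \<and> E q (c 3) \<and> \<not> E q (c 4) \<and> \<not> E q (c 0))"
    "\<not> (E p (c 1) \<and> \<not> E p (c 2) \<and> \<not> E p (c 3) \<and> E q (c 3) \<and> \<not> E q (c 2) \<and> \<not> E q (c 1))"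
    "\<not> (E p (c 1) \<and> \<not> E p (c 0) \<and> \<not> E p (c 4) \<and> E q (c 4) \<and> \<not> E q (c 0) \<and> \<not> E q (c 1))"
    "\<not> (E p (c 2) \<and> \<not> E p (c 3) \<and> \<not> E p (c 4) \<and> E q (c 4) \<and> \<not> E q (c 3) \<and> \<not> E q (c 2))"
    "\<not> (E p (c 2) \<and> \<not> E p (c 1) \<and> \<not> E p (c 0) \<and> E q (c 0) \<and> \<not> E q (c 1) \<and> \<not> E q (c 2))"
    "\<not> (E p (c 3) \<and> \<not> E p (c 4) \<and> \<not> E p (c 0) \<and> E q (c 0) \<and> \<not> E q (c 4) \<and> \<not> E q (c 3))"
    "\<not> (E p (c 3) \<and> \<not> E p (c 2) \<and> \<not> E p (c 1) \<and> E q (c 1) \<and> \<not> E q (c 2) \<and> \<not> E q (c 3))"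
    "\<not> (E p (c 4) \<and> \<not> E p (c 0) \<and> \<not> E p (c 1) \<and> E q (c 1) \<and> \<not> E q (c 0) \<and> \<not> E q (c 4))"
    "\<not> (E p (c 4) \<and> \<not> E p (c 3) \<and> \<not> E p (c 2) \<and> E q (c 2) \<and> \<not> E q (c 3) \<and> \<not> E q (c 4))"
  by (rule EL5[OF assms]; simp add: cE)+

lemma fam_EL6:
  assumes "p \<in> V" "q \<in> V" "u \<in> K" "E p u" "E q u" "\<not> E p q"
  shows "\<not> (E p (c 0) \<and> \<not> E p (c 1) \<and> \<not> E p (c 2) \<and> \<not> E p (c 3) \<and> E q (c 3) \<and> \<not> E q (c 0) \<and> \<not> E q (c 1) \<and> \<not> E q (c 2))"
    "\<not> (E p (c 0) \<and> \<not> E p (c 4) \<and> \<not> E p (c 3) \<and> \<not> E p (c 2) \<and> E q (c 2) \<and> \<not> E q (c 0) \<and> \<not> E q (c 4) \<and> \<not> E q (c 3))"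
    "\<not> (E p (c 1) \<and> \<not> E p (c 2) \<and> \<not> E p (c 3) \<and> \<not> E p (c 4) \<and> E q (c 4) \<and> \<not> E q (c 1) \<and> \<not> E q (c 2) \<and> \<not> E q (c 3))"
    "\<not> (E p (c 1) \<and> \<not> E p (c 0) \<and> \<not> E p (c 4) \<and> \<not> E p (c 3) \<and> E q (c 3) \<and> \<not> E q (c 1) \<and> \<not> E q (c 0) \<and> \<not> E q (c 4))"
    "\<not> (E p (c 2) \<and> \<not> E p (c 3) \<and> \<not> E p (c 4) \<and> \<not> E p (c 0) \<and> E q (c 0) \<and> \<not> E q (c 2) \<and> \<not> E q (c 3) \<and> \<not> E q (c 4))"
    "\<not> (E p (c 2) \<and> \<not> E p (c 1) \<and> \<not> E p (c 0) \<and> \<not> E p (c 4) \<and> E q (c 4) \<and> \<not> E q (c 2) \<and> \<not> E q (c 1) \<and> \<not> E q (c 0))"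
    "\<not> (E p (c 3) \<and> \<not> E p (c 4) \<and> \<not> E p (c 0) \<and> \<not> E p (c 1) \<and> E q (c 1) \<and> \<not> E q (c 3) \<and> \<not> E q (c 4) \<and> \<not> E q (c 0))"
    "\<not> (E p (c 3) \<and> \<not> E p (c 2) \<and> \<not> E p (c 1) \<and> \<not> E p (c 0) \<and> E q (c 0) \<and> \<not> E q (c 3) \<and> \<not> E q (c 2) \<and> \<not> E q (c 1))"
    "\<not> (E p (c 4) \<and> \<not> E p (c 0) \<and> \<not> E p (c 1) \<and> \<not> E p (c 2) \<and> E q (c 2) \<and> \<not> E q (c 4) \<and> \<not> E q (c 0) \<and> \<not> E q (c 1))"
    "\<not> (E p (c 4) \<and> \<not> E p (c 3) \<and> \<not> E p (c 2) \<and> \<not> E p (c 1) \<and> E q (c 1) \<and> \<not> E q (c 4) \<and> \<not> E q (c 3) \<and> \<not> E q (c 2))"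
  by (rule EL6[OF assms]; simp add: cE)+

lemma fam_ELP:
  assumes "u \<in> K" "y \<in> V" "x \<in> V" "E y u" "E u x" "\<not> E x y"
  shows "\<not> (E x (c 0) \<and> \<not> E x (c 1) \<and> \<not> E x (c 2) \<and> \<not> E x (c 3) \<and> \<not> E y (c 0) \<and> \<not> E y (c 1) \<and> \<not> E y (c 2) \<and> \<not> E y (c 3))"
    "\<not> (E x (c 0) \<and> \<not> E x (c 4) \<and> \<not> E x (c 3) \<and> \<not> E x (c 2) \<and> \<not> E y (c 0) \<and> \<not> E y (c 4) \<and> \<not> E y (c 3) \<and> \<not> E y (c 2))"
    "\<not> (E x (c 1) \<and> \<not> E x (c 2) \<and> \<not> E x (c 3) \<and> \<not> E x (c 4) \<and> \<not> E y (c 1) \<and> \<not> E y (c 2) \<and> \<not> E y (c 3) \<and> \<not> E y (c 4))"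
    "\<not> (E x (c 1) \<and> \<not> E x (c 0) \<and> \<not> E x (c 4) \<and> \<not> E x (c 3) \<and> \<not> E y (c 1) \<and> \<not> E y (c 0) \<and> \<not> E y (c 4) \<and> \<not> E y (c 3))"
    "\<not> (E x (c 2) \<and> \<not> E x (c 3) \<and> \<not> E x (c 4) \<and> \<not> E x (c 0) \<and> \<not> E y (c 2) \<and> \<not> E y (c 3) \<and> \<not> E y (c 4) \<and> \<not> E y (c 0))"
    "\<not> (E x (c 2) \<and> \<not> E x (c 1) \<and> \<not> E x (c 0) \<and> \<not> E x (c 4) \<and> \<not> E y (c 2) \<and> \<not> E y (c 1) \<and> \<not> E y (c 0) \<and> \<not> E y (c 4))"
    "\<not> (E x (c 3) \<and> \<not> E x (c 4) \<and> \<not> E x (c 0) \<and> \<not> E x (c 1) \<and> \<not> E y (c 3) \<and> \<not> E y (c 4) \<and> \<not> E y (c 0) \<and> \<not> E y (c 1))"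
    "\<not> (E x (c 3) \<and> \<not> E x (c 2) \<and> \<not> E x (c 1) \<and> \<not> E x (c 0) \<and> \<not> E y (c 3) \<and> \<not> E y (c 2) \<and> \<not> E y (c 1) \<and> \<not> E y (c 0))"
    "\<not> (E x (c 4) \<and> \<not> E x (c 0) \<and> \<not> E x (c 1) \<and> \<not> E x (c 2) \<and> \<not> E y (c 4) \<and> \<not> E y (c 0) \<and> \<not> E y (c 1) \<and> \<not> E y (c 2))"
    "\<not> (E x (c 4) \<and> \<not> E x (c 3) \<and> \<not> E x (c 2) \<and> \<not> E x (c 1) \<and> \<not> E y (c 4) \<and> \<not> E y (c 3) \<and> \<not> E y (c 2) \<and> \<not> E y (c 1))"
  by (rule ELP[OF assms]; simp add: cE)+

lemma fam_ELK:
  assumes "u \<in> K" "w \<in> K" "x \<in> V" "E u w" "E x u" "\<not> E x w"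
  shows "\<not> (E x (c 0) \<and> \<not> E x (c 1) \<and> \<not> E x (c 2) \<and> \<not> E x (c 3))"
    "\<not> (E x (c 0) \<and> \<not> E x (c 4) \<and> \<not> E x (c 3) \<and> \<not> E x (c 2))"
    "\<not> (E x (c 1) \<and> \<not> E x (c 2) \<and> \<not> E x (c 3) \<and> \<not> E x (c 4))"
    "\<not> (E x (c 1) \<and> \<not> E x (c 0) \<and> \<not> E x (c 4) \<and> \<not> E x (c 3))"
    "\<not> (E x (c 2) \<and> \<not> E x (c 3) \<and> \<not> E x (c 4) \<and> \<not> E x (c 0))"
    "\<not> (E x (c 2) \<and> \<not> E x (c 1) \<and> \<not> E x (c 0) \<and> \<not> E x (c 4))"
    "\<not> (E x (c 3) \<and> \<not> E x (c 4) \<and> \<not> E x (c 0) \<and> \<not> E x (c 1))"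
    "\<not> (E x (c 3) \<and> \<not> E x (c 2) \<and> \<not> E x (c 1) \<and> \<not> E x (c 0))"
    "\<not> (E x (c 4) \<and> \<not> E x (c 0) \<and> \<not> E x (c 1) \<and> \<not> E x (c 2))"
    "\<not> (E x (c 4) \<and> \<not> E x (c 3) \<and> \<not> E x (c 2) \<and> \<not> E x (c 1))"
  by (rule ELK[OF assms]; simp add: cE)+

lemma fam_EL8:
  assumes "p \<in> V" "q \<in> V" "E p q" "\<forall>i<5. p \<noteq> c i" "\<forall>i<5. q \<noteq> c i"
  shows "\<not> (E p (c 0) \<and> \<not> E p (c 1) \<and> E q (c 1) \<and> \<not> E q (c 0))"
    "\<not> (E p (c 0) \<and> \<not> E p (c 4) \<and> E q (c 4) \<and> \<not> E q (c 0))"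
    "\<not> (E p (c 1) \<and> \<not> E p (c 2) \<and> E q (c 2) \<and> \<not> E q (c 1))"
    "\<not> (E p (c 1) \<and> \<not> E p (c 0) \<and> E q (c 0) \<and> \<not> E q (c 1))"
    "\<not> (E p (c 2) \<and> \<not> E p (c 3) \<and> E q (c 3) \<and> \<not> E q (c 2))"
    "\<not> (E p (c 2) \<and> \<not> E p (c 1) \<and> E q (c 1) \<and> \<not> E q (c 2))"
    "\<not> (E p (c 3) \<and> \<not> E p (c 4) \<and> E q (c 4) \<and> \<not> E q (c 3))"
    "\<not> (E p (c 3) \<and> \<not> E p (c 2) \<and> E q (c 2) \<and> \<not> E q (c 3))"
    "\<not> (E p (c 4) \<and> \<not> E p (c 0) \<and> E q (c 0) \<and> \<not> E q (c 4))"
    "\<not> (E p (c 4) \<and> \<not> E p (c 3) \<and> E q (c 3) \<and> \<not> E q (c 4))"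
  by (rule EL8[OF assms(1-3)]; simp add: cE assms(4,5))+

lemma fam_EL9:
  assumes "p \<in> V" "q \<in> V" "x0 \<in> K" "x1 \<in> K" "E p x0" "E x0 x1" "E x1 q" "\<not> E p x1" "\<not> E x0 q" "\<not> E p q"
  shows "\<not> (E q (c 0) \<and> \<not> E q (c 1) \<and> E p (c 1) \<and> \<not> E p (c 0))"
    "\<not> (E q (c 0) \<and> \<not> E q (c 4) \<and> E p (c 4) \<and> \<not> E p (c 0))"
    "\<not> (E q (c 1) \<and> \<not> E q (c 2) \<and> E p (c 2) \<and> \<not> E p (c 1))"
    "\<not> (E q (c 1) \<and> \<not> E q (c 0) \<and> E p (c 0) \<and> \<not> E p (c 1))"
    "\<not> (E q (c 2) \<and> \<not> E q (c 3) \<and> E p (c 3) \<and> \<not> E p (c 2))"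
    "\<not> (E q (c 2) \<and> \<not> E q (c 1) \<and> E p (c 1) \<and> \<not> E p (c 2))"
    "\<not> (E q (c 3) \<and> \<not> E q (c 4) \<and> E p (c 4) \<and> \<not> E p (c 3))"
    "\<not> (E q (c 3) \<and> \<not> E q (c 2) \<and> E p (c 2) \<and> \<not> E p (c 3))"
    "\<not> (E q (c 4) \<and> \<not> E q (c 0) \<and> E p (c 0) \<and> \<not> E p (c 4))"
    "\<not> (E q (c 4) \<and> \<not> E q (c 3) \<and> E p (c 3) \<and> \<not> E p (c 4))"
  by (rule EL9[OF assms]; simp add: cE)+

lemma fam_EL10:
  assumes "p \<in> V" "q \<in> V" "x0 \<in> K" "x1 \<in> K" "E p x0" "E x0 x1" "E x1 q" "\<not> E p x1" "\<not> E x0 q" "\<not> E p q"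
  shows "\<not> (E q (c 0) \<and> \<not> E q (c 1) \<and> \<not> E q (c 2) \<and> E p (c 2) \<and> \<not> E p (c 0) \<and> \<not> E p (c 1))"
    "\<not> (E q (c 0) \<and> \<not> E q (c 4) \<and> \<not> E q (c 3) \<and> E p (c 3) \<and> \<not> E p (c 0) \<and> \<not> E p (c 4))"
    "\<not> (E q (c 1) \<and> \<not> E q (c 2) \<and> \<not> E q (c 3) \<and> E p (c 3) \<and> \<not> E p (c 1) \<and> \<not> E p (c 2))"
    "\<not> (E q (c 1) \<and> \<not> E q (c 0) \<and> \<not> E q (c 4) \<and> E p (c 4) \<and> \<not> E p (c 1) \<and> \<not> E p (c 0))"
    "\<not> (E q (c 2) \<and> \<not> E q (c 3) \<and> \<not> E q (c 4) \<and> E p (c 4) \<and> \<not> E p (c 2) \<and> \<not> E p (c 3))"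
    "\<not> (E q (c 2) \<and> \<not> E q (c 1) \<and> \<not> E q (c 0) \<and> E p (c 0) \<and> \<not> E p (c 2) \<and> \<not> E p (c 1))"
    "\<not> (E q (c 3) \<and> \<not> E q (c 4) \<and> \<not> E q (c 0) \<and> E p (c 0) \<and> \<not> E p (c 3) \<and> \<not> E p (c 4))"
    "\<not> (E q (c 3) \<and> \<not> E q (c 2) \<and> \<not> E q (c 1) \<and> E p (c 1) \<and> \<not> E p (c 3) \<and> \<not> E p (c 2))"
    "\<not> (E q (c 4) \<and> \<not> E q (c 0) \<and> \<not> E q (c 1) \<and> E p (c 1) \<and> \<not> E p (c 4) \<and> \<not> E p (c 0))"
    "\<not> (E q (c 4) \<and> \<not> E q (c 3) \<and> \<not> E q (c 2) \<and> E p (c 2) \<and> \<not> E p (c 4) \<and> \<not> E p (c 3))"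
  by (rule EL10[OF assms]; simp add: cE)+

lemma fam_EL11:
  assumes "p \<in> V" "q \<in> V" "x0 \<in> K" "x1 \<in> K" "x2 \<in> K" "E p x0" "E x0 x1" "E x1 x2" "E x2 q" "\<not> E p x1" "\<not> E p x2" "\<not> E p q" "\<not> E x0 x2" "\<not> E x0 q" "\<not> E x1 q"
  shows "\<not> (E p (c 0) \<and> E q (c 0))"
    "\<not> (E p (c 1) \<and> E q (c 1))"
    "\<not> (E p (c 2) \<and> E q (c 2))"
    "\<not> (E p (c 3) \<and> E q (c 3))"
    "\<not> (E p (c 4) \<and> E q (c 4))"
  by (rule EL11[OF assms]; simp add: cE)+

lemma fam_EL12:
  assumes "p \<in> V" "x0 \<in> K" "x1 \<in> K" "x2 \<in> K" "x3 \<in> K" "E p x0" "E x0 x1" "E x1 x2" "E x2 x3" "\<not> E p x1" "\<not> E p x2" "\<not> E p x3" "\<not> E x0 x2" "\<not> E x0 x3" "\<not> E x1 x3"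
  shows "\<not> (E p (c 0) \<and> \<not> E p (c 1))"
    "\<not> (E p (c 0) \<and> \<not> E p (c 4))"
    "\<not> (E p (c 1) \<and> \<not> E p (c 2))"
    "\<not> (E p (c 1) \<and> \<not> E p (c 0))"
    "\<not> (E p (c 2) \<and> \<not> E p (c 3))"
    "\<not> (E p (c 2) \<and> \<not> E p (c 1))"
    "\<not> (E p (c 3) \<and> \<not> E p (c 4))"
    "\<not> (E p (c 3) \<and> \<not> E p (c 2))"
    "\<not> (E p (c 4) \<and> \<not> E p (c 0))"
    "\<not> (E p (c 4) \<and> \<not> E p (c 3))"
  by (rule EL12[OF assms]; simp add: cE)+

end

context L9
begin

definition TT where "TT r x \<longleftrightarrow> (\<forall>j<5. E x (c j) = (j = (r+4) mod 5 \<or> j = r \<or> j = (r+1) mod 5))"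
definition BB where "BB r x \<longleftrightarrow> (\<forall>j<5. E x (c j) = (j = (r+3) mod 5 \<or> j = (r+2) mod 5))"
definition TT' where "TT' r x \<longleftrightarrow> (\<forall>j<5. E x (c j) = (j = r \<or> j = (r+1) mod 5 \<or> j = (r+2) mod 5))"
definition BB' where "BB' r x \<longleftrightarrow> (\<forall>j<5. E x (c j) = (j = (r+3) mod 5 \<or> j = (r+4) mod 5))"

lemma TT_0: "TT 0 x \<longleftrightarrow> (E x (c 0) \<and> E x (c 1) \<and> \<not> E x (c 2) \<and> \<not> E x (c 3) \<and> E x (c 4))" unfolding TT_def all5 by simp
lemma TT_1: "TT 1 x \<longleftrightarrow> (E x (c 0) \<and> E x (c 1) \<and> E x (c 2) \<and> \<not> E x (c 3) \<and> \<not> E x (c 4))" unfolding TT_def all5 by simp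
lemma TT_2: "TT 2 x \<longleftrightarrow> (\<not> E x (c 0) \<and> E x (c 1) \<and> E x (c 2) \<and> E x (c 3) \<and> \<not> E x (c 4))" unfolding TT_def all5 by simp
lemma TT_3: "TT 3 x \<longleftrightarrow> (\<not> E x (c 0) \<and> \<not> E x (c 1) \<and> E x (c 2) \<and> E x (c 3) \<and> E x (c 4))" unfolding TT_def all5 by simp
lemma TT_4: "TT 4 x \<longleftrightarrow> (E x (c 0) \<and> \<not> E x (c 1) \<and> \<not> E x (c 2) \<and> E x (c 3) \<and> E x (c 4))" unfolding TT_def all5 by simp
lemma BB_0: "BB 0 x \<longleftrightarrow> (\<not> E x (c 0) \<and> \<not> E x (c 1) \<and> E x (c 2) \<and> E x (c 3) \<and> \<not> E x (c 4))" unfolding BB_def all5 by simp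
lemma BB_1: "BB 1 x \<longleftrightarrow> (\<not> E x (c 0) \<and> \<not> E x (c 1) \<and> \<not> E x (c 2) \<and> E x (c 3) \<and> E x (c 4))" unfolding BB_def all5 by simp
lemma BB_2: "BB 2 x \<longleftrightarrow> (E x (c 0) \<and> \<not> E x (c 1) \<and> \<not> E x (c 2) \<and> \<not> E x (c 3) \<and> E x (c 4))" unfolding BB_def all5 by simp
lemma BB_3: "BB 3 x \<longleftrightarrow> (E x (c 0) \<and> E x (c 1) \<and> \<not> E x (c 2) \<and> \<not> E x (c 3) \<and> \<not> E x (c 4))" unfolding BB_def all5 by simp
lemma BB_4: "BB 4 x \<longleftrightarrow> (\<not> E x (c 0) \<and> E x (c 1) \<and> E x (c 2) \<and> \<not> E x (c 3) \<and> \<not> E x (c 4))" unfolding BB_def all5 by simp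
lemma TTp_0: "TT' 0 x \<longleftrightarrow> (E x (c 0) \<and> E x (c 1) \<and> E x (c 2) \<and> \<not> E x (c 3) \<and> \<not> E x (c 4))" unfolding TT'_def all5 by simp
lemma TTp_1: "TT' 1 x \<longleftrightarrow> (\<not> E x (c 0) \<and> E x (c 1) \<and> E x (c 2) \<and> E x (c 3) \<and> \<not> E x (c 4))" unfolding TT'_def all5 by simp
lemma TTp_2: "TT' 2 x \<longleftrightarrow> (\<not> E x (c 0) \<and> \<not> E x (c 1) \<and> E x (c 2) \<and> E x (c 3) \<and> E x (c 4))" unfolding TT'_def all5 by simp
lemma TTp_3: "TT' 3 x \<longleftrightarrow> (E x (c 0) \<and> \<not> E x (c 1) \<and> \<not> E x (c 2) \<and> E x (c 3) \<and> E x (c 4))" unfolding TT'_def all5 by simp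
lemma TTp_4: "TT' 4 x \<longleftrightarrow> (E x (c 0) \<and> E x (c 1) \<and> \<not> E x (c 2) \<and> \<not> E x (c 3) \<and> E x (c 4))" unfolding TT'_def all5 by simp
lemma BBp_0: "BB' 0 x \<longleftrightarrow> (\<not> E x (c 0) \<and> \<not> E x (c 1) \<and> \<not> E x (c 2) \<and> E x (c 3) \<and> E x (c 4))" unfolding BB'_def all5 by simp
lemma BBp_1: "BB' 1 x \<longleftrightarrow> (E x (c 0) \<and> \<not> E x (c 1) \<and> \<not> E x (c 2) \<and> \<not> E x (c 3) \<and> E x (c 4))" unfolding BB'_def all5 by simp
lemma BBp_2: "BB' 2 x \<longleftrightarrow> (E x (c 0) \<and> E x (c 1) \<and> \<not> E x (c 2) \<and> \<not> E x (c 3) \<and> \<not> E x (c 4))" unfolding BB'_def all5 by simp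
lemma BBp_3: "BB' 3 x \<longleftrightarrow> (\<not> E x (c 0) \<and> E x (c 1) \<and> E x (c 2) \<and> \<not> E x (c 3) \<and> \<not> E x (c 4))" unfolding BB'_def all5 by simp
lemma BBp_4: "BB' 4 x \<longleftrightarrow> (\<not> E x (c 0) \<and> \<not> E x (c 1) \<and> E x (c 2) \<and> E x (c 3) \<and> \<not> E x (c 4))" unfolding BB'_def all5 by simp
lemmas TTc = TT_0 TT_1 TT_2 TT_3 TT_4
lemmas BBc = BB_0 BB_1 BB_2 BB_3 BB_4
lemmas TTpc = TTp_0 TTp_1 TTp_2 TTp_3 TTp_4
lemmas BBpc = BBp_0 BBp_1 BBp_2 BBp_3 BBp_4

lemma shapeNK:
  assumes "x \<in> NK"
  shows "x \<in> V" "\<forall>i<5. x \<noteq> c i" "E x (c 0) \<or> E x (c 1) \<or> E x (c 2) \<or> E x (c 3) \<or> E x (c 4)"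
  using assms NK_iff NK_notC' NK_nonempty[OF assms] unfolding ex5 by auto

lemma claim3:
  assumes p: "p \<in> NK" and q: "q \<in> NK" and pq: "p \<noteq> q" and npq: "\<not> E p q"
  shows "\<exists>r<5. (TT r p \<and> BB r q) \<or> (TT r q \<and> BB r p)"
proof -
  note sp = shapeNK[OF p] and sq = shapeNK[OF q]
  note shp = fam_shape[OF sp(1,2)] and shq = fam_shape[OF sq(1,2)]
  note cr = fam_cross[OF sp(1) sq(1) pq npq]
  show ?thesis
  proof (cases "\<exists>u\<in>K. E p u \<and> E q u")
    case True
    then obtain u where u: "u \<in> K" "E p u" "E q u" by blast
    have up: "E u p" and uq: "E u q" and nqp: "\<not> E q p" using u npq Es by metis+
    note f4 = fam_EL4[OF sp(1) sq(1) u npq pq]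
    note f5 = fam_EL5[OF sp(1) sq(1) u npq]
    note f6 = fam_EL6[OF sp(1) sq(1) u npq]
    note fp1 = fam_ELP[OF u(1) sq(1) sp(1) u(3) up npq]
    note fp2 = fam_ELP[OF u(1) sp(1) sq(1) u(2) uq nqp]
    show ?thesis unfolding ex5 TTc BBc
      using shp shq cr f4 f5 f6 fp1 fp2 sp(3) sq(3) by sat
  next
    case False
    obtain u0 where u0: "u0 \<in> K" "E p u0" using p NK_iff by blast
    obtain w0 where w0: "w0 \<in> K" "E q w0" using q NK_iff by blast
    obtain n f where nf: "1 \<le> n" "f 0 = u0" "f (n - 1) = w0" "\<forall>i<n. f i \<in> K"
        "\<forall>i. Suc i < n \<longrightarrow> E (f i) (f (Suc i))"
      using walk[OF K_conn[OF u0(1) w0(1)] u0(1)] by blast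
    define W where "W n f \<longleftrightarrow> 1 \<le> n \<and> (\<forall>i<n. f i \<in> K) \<and> (\<forall>i. Suc i < n \<longrightarrow> E (f i) (f (Suc i)))
        \<and> E p (f 0) \<and> E q (f (n - 1))" for n f
    have ex: "\<exists>n. \<exists>f. W n f" using nf u0 w0 unfolding W_def by auto
    define n0 where "n0 = (LEAST n. \<exists>f. W n f)"
    have "\<exists>f. W n0 f" unfolding n0_def using ex by (rule LeastI_ex)
    then obtain g where g: "W n0 g" by blast
    have minl: "\<And>m h. W m h \<Longrightarrow> n0 \<le> m" unfolding n0_def by (blast intro: Least_le)
    have g1: "1 \<le> n0" and gK: "\<And>i. i < n0 \<Longrightarrow> g i \<in> K"
      and gE: "\<And>i. Suc i < n0 \<Longrightarrow> E (g i) (g (Suc i))" and gp: "E p (g 0)" and gq: "E q (g (n0 - 1))"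
      using g unfolding W_def by auto
    have pa: "\<not> E p (g k)" if k: "1 \<le> k" "k < n0" for k
    proof
      assume pk: "E p (g k)"
      have "W (n0 - k) (\<lambda>i. g (i + k))" unfolding W_def
      proof (intro conjI allI impI)
        show "1 \<le> n0 - k" using k by simp
        show "g (i + k) \<in> K" if "i < n0 - k" for i using that gK by simp
        show "E (g (i + k)) (g (Suc i + k))" if "Suc i < n0 - k" for i using that gE[of "i + k"] by simp
        show "E p (g (0 + k))" using pk by simp
        have "n0 - k - 1 + k = n0 - 1" using k by simp
        then show "E q (g (n0 - k - 1 + k))" using gq by simp
      qed
      then have "n0 \<le> n0 - k" by (rule minl)
      then show False using k by simp
    qed
    have qb: "\<not> E q (g k)" if k: "Suc k < n0" for k
    proof
      assume qk: "E q (g k)"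
      have "W (Suc k) g" unfolding W_def using k gK gE gp qk by auto
      then have "n0 \<le> Suc k" by (rule minl)
      then show False using k by simp
    qed
    have gc: "\<not> E (g i) (g j)" if ij: "Suc i < j" "j < n0" for i j
    proof
      assume gij: "E (g i) (g j)"
      define d where "d = j - Suc i"
      define h where "h = (\<lambda>m. if m \<le> i then g m else g (m + d))"
      have "W (n0 - d) h" unfolding W_def
      proof (intro conjI allI impI)
        show "1 \<le> n0 - d" using ij unfolding d_def by simp
        show "h m \<in> K" if "m < n0 - d" for m using that gK ij unfolding h_def d_def by auto
        show "E (h m) (h (Suc m))" if m: "Suc m < n0 - d" for m
        proof -
          consider "Suc m \<le> i" | "m = i" | "i < m" by linarith
          then show ?thesis
          proof cases
            case 1 then show ?thesis using gE[of m] ij unfolding h_def by simp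
          next
            case 2 then show ?thesis using gij ij unfolding h_def d_def by simp
          next
            case 3
            have "Suc (m + d) < n0" using m ij unfolding d_def by simp
            then show ?thesis using 3 gE[of "m + d"] unfolding h_def by simp
          qed
        qed
        show "E p (h 0)" using gp unfolding h_def by simp
        have "\<not> (n0 - d - 1 \<le> i)" using ij unfolding d_def by simp
        moreover have "n0 - d - 1 + d = n0 - 1" using ij unfolding d_def by simp
        ultimately show "E q (h (n0 - d - 1))" using gq unfolding h_def by simp
      qed
      then have "n0 \<le> n0 - d" by (rule minl)
      then show False using ij unfolding d_def by simp
    qed
    have n2: "2 \<le> n0"
    proof (rule ccontr)
      assume "\<not> 2 \<le> n0"
      then have "n0 = 1" using g1 by simp
      then show False using False gp gq gK[of 0] by auto
    qed
    have e01: "E (g 0) (g 1)" using gE[of 0] n2 by simp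
    have np1: "\<not> E p (g 1)" using pa[of 1] n2 by simp
    have k0: "g 0 \<in> K" and k1: "g 1 \<in> K" and kl: "g (n0 - 1) \<in> K" and kl2: "g (n0 - 2) \<in> K"
      using gK n2 by auto
    note kp = fam_ELK[OF k0 k1 sp(1) e01 gp np1]
    have eq1: "E (g (n0 - 1)) (g (n0 - 2))" using gE[of "n0 - 2"] n2 Es by (simp add: numeral_2_eq_2 Suc_diff_Suc)
    have nq2: "\<not> E q (g (n0 - 2))" using qb[of "n0 - 2"] n2 by (simp add: numeral_2_eq_2 Suc_diff_Suc)
    note kq = fam_ELK[OF kl kl2 sq(1) eq1 gq nq2]
    have False
    proof -
      consider "n0 = 2" | "n0 = 3" | "4 \<le> n0" using n2 by linarith
      then show False
      proof cases
        case 1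
        have h: "E (g 1) q" "\<not> E (g 0) q" using gq qb[of 0] 1 Es by auto
        note f9 = fam_EL9[OF sp(1) sq(1) k0 k1 gp e01 h(1) np1 h(2) npq]
        note f10 = fam_EL10[OF sp(1) sq(1) k0 k1 gp e01 h(1) np1 h(2) npq]
        show False using shp shq cr kp kq f9 f10 sp(3) sq(3) by sat
      next
        case 2
        have h: "E (g 1) (g 2)" "E (g 2) q" "\<not> E p (g 2)" "\<not> E (g 0) (g 2)" "\<not> E (g 0) q" "\<not> E (g 1) q"
          using gE[of 1] gq pa[of 2] gc[of 0 2] qb[of 0] qb[of 1] 2 Es by (auto simp: eval_nat_numeral)
        have k2: "g 2 \<in> K" using gK 2 by simp
        note f11 = fam_EL11[OF sp(1) sq(1) k0 k1 k2 gp e01 h(1) h(2) np1 h(3) npq h(4) h(5) h(6)]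
        show False using shp shq cr kp kq f11 sp(3) sq(3) by sat
      next
        case 3
        have h: "E (g 1) (g 2)" "E (g 2) (g 3)" "\<not> E p (g 2)" "\<not> E p (g 3)"
             "\<not> E (g 0) (g 2)" "\<not> E (g 0) (g 3)" "\<not> E (g 1) (g 3)"
          using gE[of 1] gE[of 2] pa[of 2] pa[of 3] gc[of 0 2] gc[of 0 3] gc[of 1 3] 3 by (auto simp: eval_nat_numeral)
        have k2: "g 2 \<in> K" and k3: "g 3 \<in> K" using gK 3 by auto
        note f12 = fam_EL12[OF sp(1) k0 k1 k2 k3 gp e01 h(1) h(2) np1 h(3) h(4) h(5) h(6) h(7)]
        show False using shp shq cr kp kq f12 sp(3) sq(3) by sat
      qed
    qed
    then show ?thesis ..
  qed
qed

end

context L9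
begin

definition TT2 where "TT2 r x \<longleftrightarrow> (\<forall>j<5. E x (c j) = (j = (r+1) mod 5 \<or> j = (r+2) mod 5 \<or> j = (r+3) mod 5))"

lemma TT2_0: "TT2 0 x \<longleftrightarrow> (\<not> E x (c 0) \<and> E x (c 1) \<and> E x (c 2) \<and> E x (c 3) \<and> \<not> E x (c 4))" unfolding TT2_def all5 by simp
lemma TT2_1: "TT2 1 x \<longleftrightarrow> (\<not> E x (c 0) \<and> \<not> E x (c 1) \<and> E x (c 2) \<and> E x (c 3) \<and> E x (c 4))" unfolding TT2_def all5 by simp
lemma TT2_2: "TT2 2 x \<longleftrightarrow> (E x (c 0) \<and> \<not> E x (c 1) \<and> \<not> E x (c 2) \<and> E x (c 3) \<and> E x (c 4))" unfolding TT2_def all5 by simp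
lemma TT2_3: "TT2 3 x \<longleftrightarrow> (E x (c 0) \<and> E x (c 1) \<and> \<not> E x (c 2) \<and> \<not> E x (c 3) \<and> E x (c 4))" unfolding TT2_def all5 by simp
lemma TT2_4: "TT2 4 x \<longleftrightarrow> (E x (c 0) \<and> E x (c 1) \<and> E x (c 2) \<and> \<not> E x (c 3) \<and> \<not> E x (c 4))" unfolding TT2_def all5 by simp
lemmas TT2c = TT2_0 TT2_1 TT2_2 TT2_3 TT2_4

lemma r5: "r < (5::nat) \<Longrightarrow> r = 0 \<or> r = 1 \<or> r = 2 \<or> r = 3 \<or> r = 4" by auto


lemma claim1_0:
  assumes x: "x \<in> NK" and b: "BB 0 x" and u: "u \<in> K"
  shows "E x u"
proof (rule ccontr)
  assume nxu: "\<not> E x u"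
  obtain u0 where u0: "u0 \<in> K" "E x u0" using x NK_iff by blast
  obtain u' w where uw: "u' \<in> K" "w \<in> K" "E u' w" "E x u'" "\<not> E x w"
    using noncomplete[OF u0(1) u u0(2) nxu] by blast
  note sx = shapeNK[OF x]
  note kk = fam_ELK[OF uw(1) uw(2) sx(1) uw(3) uw(4) uw(5)]
  show False using kk b unfolding BBc by simp
qed

lemma claim2_0:
  assumes p: "p \<in> NK" and q: "q \<in> NK" and tp: "TT 0 p" and tq: "TT2 0 q"
  shows False
proof -
  note sp = shapeNK[OF p] and sq = shapeNK[OF q]
  note L = tp[unfolded TTc] tq[unfolded TT2c]
  show False
  proof (cases "E p q")
    case True
    note f8 = fam_EL8[OF sp(1) sq(1) True sp(2) sq(2)]
    show False using f8 L by simp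
  next
    case False
    have pq: "p \<noteq> q"
    proof
      assume eq: "p = q"
      show False using L unfolding eq by simp
    qed
    show False using claim3[OF p q pq False] L unfolding ex5 TTc BBc by simp
  qed
qed

lemma claim4_0:
  assumes p: "p \<in> NK" and p': "p' \<in> NK" and q: "q \<in> NK" and q': "q' \<in> NK"
    and tp: "TT 0 p" and bq: "BB 0 q" and tp': "TT' 0 p'" and bq': "BB' 0 q'"
  shows False
proof -
  note sp = shapeNK[OF p] and sq = shapeNK[OF q] and sp' = shapeNK[OF p'] and sq' = shapeNK[OF q']
  note L = tp[unfolded TTc] bq[unfolded BBc] tp'[unfolded TTpc] bq'[unfolded BBpc]
  have d1: "p \<noteq> q" proof assume eq: "p = q" show False using L unfolding eq by simp qed
  have d2: "p' \<noteq> q'" proof assume eq: "p' = q'" show False using L unfolding eq by simp qed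
  have d3: "p \<noteq> p'" proof assume eq: "p = p'" show False using L unfolding eq by simp qed
  have d4: "q \<noteq> q'" proof assume eq: "q = q'" show False using L unfolding eq by simp qed
  have d5: "p \<noteq> q'" proof assume eq: "p = q'" show False using L unfolding eq by simp qed
  have d6: "p' \<noteq> q" proof assume eq: "p' = q" show False using L unfolding eq by simp qed
  have npq: "\<not> E p q"
  proof
    assume e: "E p q"
    show False using fam_EL8[OF sp(1) sq(1) e sp(2) sq(2)] L by simp
  qed
  have npq': "\<not> E p' q'"
  proof
    assume e: "E p' q'"
    show False using fam_EL8[OF sp'(1) sq'(1) e sp'(2) sq'(2)] L by simp
  qed
  have epp': "E p p'"
  proof (rule ccontr)
    assume e: "\<not> E p p'"
    show False using claim3[OF p p' d3 e] L unfolding ex5 TTc BBc by simp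
  qed
  have eqq': "E q q'"
  proof (rule ccontr)
    assume e: "\<not> E q q'"
    show False using claim3[OF q q' d4 e] L unfolding ex5 TTc BBc by simp
  qed
  have epq': "E p q'"
  proof (rule ccontr)
    assume e: "\<not> E p q'"
    show False using claim3[OF p q' d5 e] L unfolding ex5 TTc BBc by simp
  qed
  have ep'q: "E p' q"
  proof (rule ccontr)
    assume e: "\<not> E p' q"
    show False using claim3[OF p' q d6 e] L unfolding ex5 TTc BBc by simp
  qed
  have "\<exists>f. induced_cycle V E 4 f"
    by (rule C4I[OF G, of p p' q q']) (use sp(1) sp'(1) sq(1) sq'(1) epp' ep'q eqq' epq' npq npq' d1 d2 in \<open>simp_all add: Es\<close>)
  with noC4 show False by blast
qed


lemma claim1_1:
  assumes x: "x \<in> NK" and b: "BB 1 x" and u: "u \<in> K"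
  shows "E x u"
proof (rule ccontr)
  assume nxu: "\<not> E x u"
  obtain u0 where u0: "u0 \<in> K" "E x u0" using x NK_iff by blast
  obtain u' w where uw: "u' \<in> K" "w \<in> K" "E u' w" "E x u'" "\<not> E x w"
    using noncomplete[OF u0(1) u u0(2) nxu] by blast
  note sx = shapeNK[OF x]
  note kk = fam_ELK[OF uw(1) uw(2) sx(1) uw(3) uw(4) uw(5)]
  show False using kk b unfolding BBc by simp
qed

lemma claim2_1:
  assumes p: "p \<in> NK" and q: "q \<in> NK" and tp: "TT 1 p" and tq: "TT2 1 q"
  shows False
proof -
  note sp = shapeNK[OF p] and sq = shapeNK[OF q]
  note L = tp[unfolded TTc] tq[unfolded TT2c]
  show False
  proof (cases "E p q")
    case True
    note f8 = fam_EL8[OF sp(1) sq(1) True sp(2) sq(2)]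
    show False using f8 L by simp
  next
    case False
    have pq: "p \<noteq> q"
    proof
      assume eq: "p = q"
      show False using L unfolding eq by simp
    qed
    show False using claim3[OF p q pq False] L unfolding ex5 TTc BBc by simp
  qed
qed

lemma claim4_1:
  assumes p: "p \<in> NK" and p': "p' \<in> NK" and q: "q \<in> NK" and q': "q' \<in> NK"
    and tp: "TT 1 p" and bq: "BB 1 q" and tp': "TT' 1 p'" and bq': "BB' 1 q'"
  shows False
proof -
  note sp = shapeNK[OF p] and sq = shapeNK[OF q] and sp' = shapeNK[OF p'] and sq' = shapeNK[OF q']
  note L = tp[unfolded TTc] bq[unfolded BBc] tp'[unfolded TTpc] bq'[unfolded BBpc]
  have d1: "p \<noteq> q" proof assume eq: "p = q" show False using L unfolding eq by simp qed
  have d2: "p' \<noteq> q'" proof assume eq: "p' = q'" show False using L unfolding eq by simp qed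
  have d3: "p \<noteq> p'" proof assume eq: "p = p'" show False using L unfolding eq by simp qed
  have d4: "q \<noteq> q'" proof assume eq: "q = q'" show False using L unfolding eq by simp qed
  have d5: "p \<noteq> q'" proof assume eq: "p = q'" show False using L unfolding eq by simp qed
  have d6: "p' \<noteq> q" proof assume eq: "p' = q" show False using L unfolding eq by simp qed
  have npq: "\<not> E p q"
  proof
    assume e: "E p q"
    show False using fam_EL8[OF sp(1) sq(1) e sp(2) sq(2)] L by simp
  qed
  have npq': "\<not> E p' q'"
  proof
    assume e: "E p' q'"
    show False using fam_EL8[OF sp'(1) sq'(1) e sp'(2) sq'(2)] L by simp
  qed
  have epp': "E p p'"
  proof (rule ccontr)
    assume e: "\<not> E p p'"
    show False using claim3[OF p p' d3 e] L unfolding ex5 TTc BBc by simp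
  qed
  have eqq': "E q q'"
  proof (rule ccontr)
    assume e: "\<not> E q q'"
    show False using claim3[OF q q' d4 e] L unfolding ex5 TTc BBc by simp
  qed
  have epq': "E p q'"
  proof (rule ccontr)
    assume e: "\<not> E p q'"
    show False using claim3[OF p q' d5 e] L unfolding ex5 TTc BBc by simp
  qed
  have ep'q: "E p' q"
  proof (rule ccontr)
    assume e: "\<not> E p' q"
    show False using claim3[OF p' q d6 e] L unfolding ex5 TTc BBc by simp
  qed
  have "\<exists>f. induced_cycle V E 4 f"
    by (rule C4I[OF G, of p p' q q']) (use sp(1) sp'(1) sq(1) sq'(1) epp' ep'q eqq' epq' npq npq' d1 d2 in \<open>simp_all add: Es\<close>)
  with noC4 show False by blast
qed


lemma claim1_2:
  assumes x: "x \<in> NK" and b: "BB 2 x" and u: "u \<in> K"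
  shows "E x u"
proof (rule ccontr)
  assume nxu: "\<not> E x u"
  obtain u0 where u0: "u0 \<in> K" "E x u0" using x NK_iff by blast
  obtain u' w where uw: "u' \<in> K" "w \<in> K" "E u' w" "E x u'" "\<not> E x w"
    using noncomplete[OF u0(1) u u0(2) nxu] by blast
  note sx = shapeNK[OF x]
  note kk = fam_ELK[OF uw(1) uw(2) sx(1) uw(3) uw(4) uw(5)]
  show False using kk b unfolding BBc by simp
qed

lemma claim2_2:
  assumes p: "p \<in> NK" and q: "q \<in> NK" and tp: "TT 2 p" and tq: "TT2 2 q"
  shows False
proof -
  note sp = shapeNK[OF p] and sq = shapeNK[OF q]
  note L = tp[unfolded TTc] tq[unfolded TT2c]
  show False
  proof (cases "E p q")
    case True
    note f8 = fam_EL8[OF sp(1) sq(1) True sp(2) sq(2)]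
    show False using f8 L by simp
  next
    case False
    have pq: "p \<noteq> q"
    proof
      assume eq: "p = q"
      show False using L unfolding eq by simp
    qed
    show False using claim3[OF p q pq False] L unfolding ex5 TTc BBc by simp
  qed
qed

lemma claim4_2:
  assumes p: "p \<in> NK" and p': "p' \<in> NK" and q: "q \<in> NK" and q': "q' \<in> NK"
    and tp: "TT 2 p" and bq: "BB 2 q" and tp': "TT' 2 p'" and bq': "BB' 2 q'"
  shows False
proof -
  note sp = shapeNK[OF p] and sq = shapeNK[OF q] and sp' = shapeNK[OF p'] and sq' = shapeNK[OF q']
  note L = tp[unfolded TTc] bq[unfolded BBc] tp'[unfolded TTpc] bq'[unfolded BBpc]
  have d1: "p \<noteq> q" proof assume eq: "p = q" show False using L unfolding eq by simp qed
  have d2: "p' \<noteq> q'" proof assume eq: "p' = q'" show False using L unfolding eq by simp qed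
  have d3: "p \<noteq> p'" proof assume eq: "p = p'" show False using L unfolding eq by simp qed
  have d4: "q \<noteq> q'" proof assume eq: "q = q'" show False using L unfolding eq by simp qed
  have d5: "p \<noteq> q'" proof assume eq: "p = q'" show False using L unfolding eq by simp qed
  have d6: "p' \<noteq> q" proof assume eq: "p' = q" show False using L unfolding eq by simp qed
  have npq: "\<not> E p q"
  proof
    assume e: "E p q"
    show False using fam_EL8[OF sp(1) sq(1) e sp(2) sq(2)] L by simp
  qed
  have npq': "\<not> E p' q'"
  proof
    assume e: "E p' q'"
    show False using fam_EL8[OF sp'(1) sq'(1) e sp'(2) sq'(2)] L by simp
  qed
  have epp': "E p p'"
  proof (rule ccontr)
    assume e: "\<not> E p p'"
    show False using claim3[OF p p' d3 e] L unfolding ex5 TTc BBc by simp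
  qed
  have eqq': "E q q'"
  proof (rule ccontr)
    assume e: "\<not> E q q'"
    show False using claim3[OF q q' d4 e] L unfolding ex5 TTc BBc by simp
  qed
  have epq': "E p q'"
  proof (rule ccontr)
    assume e: "\<not> E p q'"
    show False using claim3[OF p q' d5 e] L unfolding ex5 TTc BBc by simp
  qed
  have ep'q: "E p' q"
  proof (rule ccontr)
    assume e: "\<not> E p' q"
    show False using claim3[OF p' q d6 e] L unfolding ex5 TTc BBc by simp
  qed
  have "\<exists>f. induced_cycle V E 4 f"
    by (rule C4I[OF G, of p p' q q']) (use sp(1) sp'(1) sq(1) sq'(1) epp' ep'q eqq' epq' npq npq' d1 d2 in \<open>simp_all add: Es\<close>)
  with noC4 show False by blast
qed


lemma claim1_3:
  assumes x: "x \<in> NK" and b: "BB 3 x" and u: "u \<in> K"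
  shows "E x u"
proof (rule ccontr)
  assume nxu: "\<not> E x u"
  obtain u0 where u0: "u0 \<in> K" "E x u0" using x NK_iff by blast
  obtain u' w where uw: "u' \<in> K" "w \<in> K" "E u' w" "E x u'" "\<not> E x w"
    using noncomplete[OF u0(1) u u0(2) nxu] by blast
  note sx = shapeNK[OF x]
  note kk = fam_ELK[OF uw(1) uw(2) sx(1) uw(3) uw(4) uw(5)]
  show False using kk b unfolding BBc by simp
qed

lemma claim2_3:
  assumes p: "p \<in> NK" and q: "q \<in> NK" and tp: "TT 3 p" and tq: "TT2 3 q"
  shows False
proof -
  note sp = shapeNK[OF p] and sq = shapeNK[OF q]
  note L = tp[unfolded TTc] tq[unfolded TT2c]
  show False
  proof (cases "E p q")
    case True
    note f8 = fam_EL8[OF sp(1) sq(1) True sp(2) sq(2)]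
    show False using f8 L by simp
  next
    case False
    have pq: "p \<noteq> q"
    proof
      assume eq: "p = q"
      show False using L unfolding eq by simp
    qed
    show False using claim3[OF p q pq False] L unfolding ex5 TTc BBc by simp
  qed
qed

lemma claim4_3:
  assumes p: "p \<in> NK" and p': "p' \<in> NK" and q: "q \<in> NK" and q': "q' \<in> NK"
    and tp: "TT 3 p" and bq: "BB 3 q" and tp': "TT' 3 p'" and bq': "BB' 3 q'"
  shows False
proof -
  note sp = shapeNK[OF p] and sq = shapeNK[OF q] and sp' = shapeNK[OF p'] and sq' = shapeNK[OF q']
  note L = tp[unfolded TTc] bq[unfolded BBc] tp'[unfolded TTpc] bq'[unfolded BBpc]
  have d1: "p \<noteq> q" proof assume eq: "p = q" show False using L unfolding eq by simp qed
  have d2: "p' \<noteq> q'" proof assume eq: "p' = q'" show False using L unfolding eq by simp qed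
  have d3: "p \<noteq> p'" proof assume eq: "p = p'" show False using L unfolding eq by simp qed
  have d4: "q \<noteq> q'" proof assume eq: "q = q'" show False using L unfolding eq by simp qed
  have d5: "p \<noteq> q'" proof assume eq: "p = q'" show False using L unfolding eq by simp qed
  have d6: "p' \<noteq> q" proof assume eq: "p' = q" show False using L unfolding eq by simp qed
  have npq: "\<not> E p q"
  proof
    assume e: "E p q"
    show False using fam_EL8[OF sp(1) sq(1) e sp(2) sq(2)] L by simp
  qed
  have npq': "\<not> E p' q'"
  proof
    assume e: "E p' q'"
    show False using fam_EL8[OF sp'(1) sq'(1) e sp'(2) sq'(2)] L by simp
  qed
  have epp': "E p p'"
  proof (rule ccontr)
    assume e: "\<not> E p p'"
    show False using claim3[OF p p' d3 e] L unfolding ex5 TTc BBc by simp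
  qed
  have eqq': "E q q'"
  proof (rule ccontr)
    assume e: "\<not> E q q'"
    show False using claim3[OF q q' d4 e] L unfolding ex5 TTc BBc by simp
  qed
  have epq': "E p q'"
  proof (rule ccontr)
    assume e: "\<not> E p q'"
    show False using claim3[OF p q' d5 e] L unfolding ex5 TTc BBc by simp
  qed
  have ep'q: "E p' q"
  proof (rule ccontr)
    assume e: "\<not> E p' q"
    show False using claim3[OF p' q d6 e] L unfolding ex5 TTc BBc by simp
  qed
  have "\<exists>f. induced_cycle V E 4 f"
    by (rule C4I[OF G, of p p' q q']) (use sp(1) sp'(1) sq(1) sq'(1) epp' ep'q eqq' epq' npq npq' d1 d2 in \<open>simp_all add: Es\<close>)
  with noC4 show False by blast
qed


lemma claim1_4:
  assumes x: "x \<in> NK" and b: "BB 4 x" and u: "u \<in> K"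
  shows "E x u"
proof (rule ccontr)
  assume nxu: "\<not> E x u"
  obtain u0 where u0: "u0 \<in> K" "E x u0" using x NK_iff by blast
  obtain u' w where uw: "u' \<in> K" "w \<in> K" "E u' w" "E x u'" "\<not> E x w"
    using noncomplete[OF u0(1) u u0(2) nxu] by blast
  note sx = shapeNK[OF x]
  note kk = fam_ELK[OF uw(1) uw(2) sx(1) uw(3) uw(4) uw(5)]
  show False using kk b unfolding BBc by simp
qed

lemma claim2_4:
  assumes p: "p \<in> NK" and q: "q \<in> NK" and tp: "TT 4 p" and tq: "TT2 4 q"
  shows False
proof -
  note sp = shapeNK[OF p] and sq = shapeNK[OF q]
  note L = tp[unfolded TTc] tq[unfolded TT2c]
  show False
  proof (cases "E p q")
    case True
    note f8 = fam_EL8[OF sp(1) sq(1) True sp(2) sq(2)]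
    show False using f8 L by simp
  next
    case False
    have pq: "p \<noteq> q"
    proof
      assume eq: "p = q"
      show False using L unfolding eq by simp
    qed
    show False using claim3[OF p q pq False] L unfolding ex5 TTc BBc by simp
  qed
qed

lemma claim4_4:
  assumes p: "p \<in> NK" and p': "p' \<in> NK" and q: "q \<in> NK" and q': "q' \<in> NK"
    and tp: "TT 4 p" and bq: "BB 4 q" and tp': "TT' 4 p'" and bq': "BB' 4 q'"
  shows False
proof -
  note sp = shapeNK[OF p] and sq = shapeNK[OF q] and sp' = shapeNK[OF p'] and sq' = shapeNK[OF q']
  note L = tp[unfolded TTc] bq[unfolded BBc] tp'[unfolded TTpc] bq'[unfolded BBpc]
  have d1: "p \<noteq> q" proof assume eq: "p = q" show False using L unfolding eq by simp qed
  have d2: "p' \<noteq> q'" proof assume eq: "p' = q'" show False using L unfolding eq by simp qed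
  have d3: "p \<noteq> p'" proof assume eq: "p = p'" show False using L unfolding eq by simp qed
  have d4: "q \<noteq> q'" proof assume eq: "q = q'" show False using L unfolding eq by simp qed
  have d5: "p \<noteq> q'" proof assume eq: "p = q'" show False using L unfolding eq by simp qed
  have d6: "p' \<noteq> q" proof assume eq: "p' = q" show False using L unfolding eq by simp qed
  have npq: "\<not> E p q"
  proof
    assume e: "E p q"
    show False using fam_EL8[OF sp(1) sq(1) e sp(2) sq(2)] L by simp
  qed
  have npq': "\<not> E p' q'"
  proof
    assume e: "E p' q'"
    show False using fam_EL8[OF sp'(1) sq'(1) e sp'(2) sq'(2)] L by simp
  qed
  have epp': "E p p'"
  proof (rule ccontr)
    assume e: "\<not> E p p'"
    show False using claim3[OF p p' d3 e] L unfolding ex5 TTc BBc by simp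
  qed
  have eqq': "E q q'"
  proof (rule ccontr)
    assume e: "\<not> E q q'"
    show False using claim3[OF q q' d4 e] L unfolding ex5 TTc BBc by simp
  qed
  have epq': "E p q'"
  proof (rule ccontr)
    assume e: "\<not> E p q'"
    show False using claim3[OF p q' d5 e] L unfolding ex5 TTc BBc by simp
  qed
  have ep'q: "E p' q"
  proof (rule ccontr)
    assume e: "\<not> E p' q"
    show False using claim3[OF p' q d6 e] L unfolding ex5 TTc BBc by simp
  qed
  have "\<exists>f. induced_cycle V E 4 f"
    by (rule C4I[OF G, of p p' q q']) (use sp(1) sp'(1) sq(1) sq'(1) epp' ep'q eqq' epq' npq npq' d1 d2 in \<open>simp_all add: Es\<close>)
  with noC4 show False by blast
qed


lemma claim1: assumes r: "r < 5" and h: "x \<in> NK" "BB r x" "u \<in> K" shows "E x u"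
  using r5[OF r] claim1_0[OF h(1) _ h(3)] claim1_1[OF h(1) _ h(3)] claim1_2[OF h(1) _ h(3)]
    claim1_3[OF h(1) _ h(3)] claim1_4[OF h(1) _ h(3)] h(2) by (elim disjE; simp)
lemma claim2: assumes r: "r < 5" and h: "p \<in> NK" "q \<in> NK" "TT r p" "TT2 r q" shows False
  using r5[OF r] claim2_0[OF h(1,2)] claim2_1[OF h(1,2)] claim2_2[OF h(1,2)]
    claim2_3[OF h(1,2)] claim2_4[OF h(1,2)] h(3,4) by (elim disjE; simp)
lemma claim4: assumes r: "r < 5" and h: "p \<in> NK" "p' \<in> NK" "q \<in> NK" "q' \<in> NK"
    "TT r p" "BB r q" "TT' r p'" "BB' r q'" shows False
  using r5[OF r] claim4_0[OF h(1-4)] claim4_1[OF h(1-4)] claim4_2[OF h(1-4)]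
    claim4_3[OF h(1-4)] claim4_4[OF h(1-4)] h(5-8) by (elim disjE; simp)

lemma memS:
  assumes "a < 5" "b < 5" "d < 5"
  shows "x \<in> Sset V E (c ` {0..<5}) {c a, c b, c d} \<longleftrightarrow>
    x \<in> V \<and> x \<notin> c ` {0..<5} \<and> (\<forall>j<5. E x (c j) = (j = a \<or> j = b \<or> j = d))"
proof -
  have "{c a, c b, c d} = c ` {a, b, d}" by simp
  then show ?thesis using Sset_iff[of "{a, b, d}" x] assms by simp
qed

lemma memS2:
  assumes "a < 5" "b < 5"
  shows "x \<in> Sset V E (c ` {0..<5}) {c a, c b} \<longleftrightarrow>
    x \<in> V \<and> x \<notin> c ` {0..<5} \<and> (\<forall>j<5. E x (c j) = (j = a \<or> j = b))"
proof -
  have "{c a, c b} = c ` {a, b}" by simp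
  then show ?thesis using Sset_iff[of "{a, b}" x] assms by simp
qed

end

theorem lemma9p1:
  fixes V :: "'a set" and E :: "'a \<Rightarrow> 'a \<Rightarrow> bool" and c :: "nat \<Rightarrow> 'a" and K :: "'a set"
  assumes G: "graph V E"
    and noP7: "\<not> (\<exists>f. induced_path V E 7 f)"
    and noC4: "\<not> (\<exists>f. induced_cycle V E 4 f)"
    and noC6: "\<not> (\<exists>f. induced_cycle V E 6 f)"
    and noC7: "\<not> (\<exists>f. induced_cycle V E 7 f)"
    and C5: "induced_cycle V E 5 c"
    and K: "component_of E (Sset V E (c ` {0..<5}) {}) K"
    and notclique: "\<not> is_clique E K"
  defines "v \<equiv> (\<lambda>i. c (i mod 5))"
    and "S \<equiv> Sset V E (c ` {0..<5})"
    and "NK \<equiv> nbhd V E K"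
  shows
    "(\<forall>i. \<forall>x \<in> NK \<inter> S {v (i+3), v (i+2)}. \<forall>u\<in>K. E x u)
   \<and> (\<forall>i. NK \<inter> S {v (i+4), v i, v (i+1)} = {} \<or> NK \<inter> S {v (i+1), v (i+2), v (i+3)} = {})
   \<and> (\<forall>p\<in>NK. \<forall>q\<in>NK. p \<noteq> q \<and> \<not> E p q \<longrightarrow>
        (\<exists>i. (p \<in> S {v (i+4), v i, v (i+1)} \<and> q \<in> S {v (i+3), v (i+2)})
           \<or> (q \<in> S {v (i+4), v i, v (i+1)} \<and> p \<in> S {v (i+3), v (i+2)})))
   \<and> \<not> (\<exists>i p p' q q'. p \<in> NK \<and> p' \<in> NK \<and> q \<in> NK \<and> q' \<in> NK
        \<and> p \<in> S {v (i+4), v i, v (i+1)} \<and> q \<in> S {v (i+3), v (i+2)}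
        \<and> p' \<in> S {v i, v (i+1), v (i+2)} \<and> q' \<in> S {v (i+3), v (i+4)})"
proof -
  have L: "L9 V E c K" unfolding L9_def using G noP7 noC4 noC6 noC7 C5 K notclique by blast
  interpret L9 V E c K by (rule L)
  have vk: "\<And>i k. v (i + k) = c ((i mod 5 + k) mod 5)" unfolding v_def by (simp add: mod_add_left_eq)
  have v0: "\<And>i. v i = c (i mod 5)" unfolding v_def by simp
  have m5: "\<And>i. i mod 5 < (5::nat)" by simp
  have ST: "\<And>i x. x \<in> S {v (i+4), v i, v (i+1)} \<longleftrightarrow> x \<in> V \<and> x \<notin> c ` {0..<5} \<and> TT (i mod 5) x"
    unfolding S_def vk unfolding v0 by (simp add: memS TT_def)
  have SB: "\<And>i x. x \<in> S {v (i+3), v (i+2)} \<longleftrightarrow> x \<in> V \<and> x \<notin> c ` {0..<5} \<and> BB (i mod 5) x"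
    unfolding S_def vk by (simp add: memS2 BB_def)
  have ST2: "\<And>i x. x \<in> S {v (i+1), v (i+2), v (i+3)} \<longleftrightarrow> x \<in> V \<and> x \<notin> c ` {0..<5} \<and> TT2 (i mod 5) x"
    unfolding S_def vk by (simp add: memS TT2_def)
  have STp: "\<And>i x. x \<in> S {v i, v (i+1), v (i+2)} \<longleftrightarrow> x \<in> V \<and> x \<notin> c ` {0..<5} \<and> TT' (i mod 5) x"
    unfolding S_def vk unfolding v0 by (simp add: memS TT'_def)
  have SBp: "\<And>i x. x \<in> S {v (i+3), v (i+4)} \<longleftrightarrow> x \<in> V \<and> x \<notin> c ` {0..<5} \<and> BB' (i mod 5) x"
    unfolding S_def vk by (simp add: memS2 BB'_def)
  have c1: "\<forall>i. \<forall>x \<in> NK \<inter> S {v (i+3), v (i+2)}. \<forall>u\<in>K. E x u"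
  proof (intro allI ballI)
    fix i x u assume x: "x \<in> NK \<inter> S {v (i+3), v (i+2)}" and u: "u \<in> K"
    then have "x \<in> nbhd V E K" "BB (i mod 5) x" using SB unfolding NK_def by auto
    then show "E x u" using claim1[OF m5 _ _ u] by blast
  qed
  have c2: "\<forall>i. NK \<inter> S {v (i+4), v i, v (i+1)} = {} \<or> NK \<inter> S {v (i+1), v (i+2), v (i+3)} = {}"
  proof (rule allI, rule ccontr)
    fix i
    assume "\<not> (NK \<inter> S {v (i+4), v i, v (i+1)} = {} \<or> NK \<inter> S {v (i+1), v (i+2), v (i+3)} = {})"
    then obtain p q where p: "p \<in> NK" "p \<in> S {v (i+4), v i, v (i+1)}"
      and q: "q \<in> NK" "q \<in> S {v (i+1), v (i+2), v (i+3)}" by blast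
    have "TT (i mod 5) p" "TT2 (i mod 5) q" using p(2) q(2) ST ST2 by auto
    then show False using claim2[OF m5] p(1) q(1) unfolding NK_def by blast
  qed
  have c3: "\<forall>p\<in>NK. \<forall>q\<in>NK. p \<noteq> q \<and> \<not> E p q \<longrightarrow>
        (\<exists>i. (p \<in> S {v (i+4), v i, v (i+1)} \<and> q \<in> S {v (i+3), v (i+2)})
           \<or> (q \<in> S {v (i+4), v i, v (i+1)} \<and> p \<in> S {v (i+3), v (i+2)}))"
  proof (intro ballI impI)
    fix p q assume p: "p \<in> NK" and q: "q \<in> NK" and pq: "p \<noteq> q \<and> \<not> E p q"
    have p': "p \<in> nbhd V E K" and q': "q \<in> nbhd V E K" using p q unfolding NK_def by auto
    obtain r where r: "r < 5" "(TT r p \<and> BB r q) \<or> (TT r q \<and> BB r p)"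
      using claim3[OF p' q'] pq by blast
    have rm: "r mod 5 = r" using r(1) by simp
    have pv: "p \<in> V" "p \<notin> c ` {0..<5}" using p' NK_iff NK_notC by auto
    have qv: "q \<in> V" "q \<notin> c ` {0..<5}" using q' NK_iff NK_notC by auto
    have "(p \<in> S {v (r+4), v r, v (r+1)} \<and> q \<in> S {v (r+3), v (r+2)})
           \<or> (q \<in> S {v (r+4), v r, v (r+1)} \<and> p \<in> S {v (r+3), v (r+2)})"
      unfolding ST SB rm using r(2) pv qv by blast
    then show "\<exists>i. (p \<in> S {v (i+4), v i, v (i+1)} \<and> q \<in> S {v (i+3), v (i+2)})
           \<or> (q \<in> S {v (i+4), v i, v (i+1)} \<and> p \<in> S {v (i+3), v (i+2)})" by blast
  qed
  have c4: "\<not> (\<exists>i p p' q q'. p \<in> NK \<and> p' \<in> NK \<and> q \<in> NK \<and> q' \<in> NK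
        \<and> p \<in> S {v (i+4), v i, v (i+1)} \<and> q \<in> S {v (i+3), v (i+2)}
        \<and> p' \<in> S {v i, v (i+1), v (i+2)} \<and> q' \<in> S {v (i+3), v (i+4)})"
  proof
    assume "\<exists>i p p' q q'. p \<in> NK \<and> p' \<in> NK \<and> q \<in> NK \<and> q' \<in> NK
        \<and> p \<in> S {v (i+4), v i, v (i+1)} \<and> q \<in> S {v (i+3), v (i+2)}
        \<and> p' \<in> S {v i, v (i+1), v (i+2)} \<and> q' \<in> S {v (i+3), v (i+4)}"
    then obtain i p p' q q' where h: "p \<in> NK" "p' \<in> NK" "q \<in> NK" "q' \<in> NK"
        "p \<in> S {v (i+4), v i, v (i+1)}" "q \<in> S {v (i+3), v (i+2)}"
        "p' \<in> S {v i, v (i+1), v (i+2)}" "q' \<in> S {v (i+3), v (i+4)}" by blast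
    have t: "TT (i mod 5) p" "BB (i mod 5) q" "TT' (i mod 5) p'" "BB' (i mod 5) q'"
      using h(5-8) ST SB STp SBp by auto
    show False using claim4[OF m5 h(1-4)[unfolded NK_def] t] .
  qed
  show ?thesis using c1 c2 c3 c4 by blast
qed

end
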